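(* Let $\mathbb{F}$ be a field, $p,q\in\mathbb{F}[t]$ monic of degree $2$, and $\mathcal{W}_{p,q}=\mathbb{F}\langle a,b\rangle/(p(a),q(b))$. Let $\Phi$ be an injective endomorphism of the $\mathbb{F}$-algebra $\mathcal{W}_{p,q}$. Then $\Phi(x^\star)=\Phi(x)^\star$ for all $x\in\mathcal{W}_{p,q}$.
   Context: $\mathcal{W}_{p,q}$ is the free associative unital $\mathbb{F}$-algebra on two generators modulo the ideal generated by $p(a),q(b)$. For a $2$-dimensional algebra set $x^\star=\mathrm{tr}(x)-x$; the adjunction $x\mapsto x^\star$ of $\mathcal{W}_{p,q}$ is the unique $\mathbb{F}$-linear anti-automorphism agreeing with this on $\mathbb{F}[a]$ and $\mathbb{F}[b]$ (so $a^\star=\mathrm{tr}(p)-a$, $b^\star=\mathrm{tr}(q)-b$, with $\mathrm{tr}(p)$ minus the coefficient of $t$ in $p$). *)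

theory Defs
  imports "HOL-Algebra.QuotRing" "HOL-Computational_Algebra.Polynomial"
begin

text \<open>Words over the alphabet {a,b} are encoded as bool lists (False = a, True = b);
  an element is a finitely supported function from words to coefficients.\<close>

definition fa_mult :: "(bool list \<Rightarrow> 'f::field) \<Rightarrow> (bool list \<Rightarrow> 'f) \<Rightarrow> bool list \<Rightarrow> 'f" where
  "fa_mult f g w = (\<Sum>i\<le>length w. f (take i w) * g (drop i w))"

definition FreeAlg :: "(bool list \<Rightarrow> 'f::field) ring" where
  "FreeAlg = \<lparr>carrier = {f. finite {w. f w \<noteq> 0}},
              monoid.mult = fa_mult,
              one = (\<lambda>w. if w = [] then 1 else 0),
              zero = (\<lambda>w. 0),
              add = (\<lambda>f g w. f w + g w)\<rparr>"

definition fa_smult :: "'f::field \<Rightarrow> (bool list \<Rightarrow> 'f) \<Rightarrow> bool list \<Rightarrow> 'f" where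
  "fa_smult c f = (\<lambda>w. c * f w)"

definition fa_scalar :: "'f::field \<Rightarrow> bool list \<Rightarrow> 'f" where
  "fa_scalar c = fa_smult c \<one>\<^bsub>FreeAlg\<^esub>"

definition gen_a :: "bool list \<Rightarrow> 'f::field" where
  "gen_a = (\<lambda>w. if w = [False] then 1 else 0)"

definition gen_b :: "bool list \<Rightarrow> 'f::field" where
  "gen_b = (\<lambda>w. if w = [True] then 1 else 0)"

definition fa_eval :: "'f::field poly \<Rightarrow> (bool list \<Rightarrow> 'f) \<Rightarrow> bool list \<Rightarrow> 'f" where
  "fa_eval p x = (\<lambda>w. \<Sum>i\<le>degree p. Polynomial.coeff p i * (x [^]\<^bsub>FreeAlg\<^esub> i) w)"

definition W_ideal :: "'f::field poly \<Rightarrow> 'f poly \<Rightarrow> (bool list \<Rightarrow> 'f) set" where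
  "W_ideal p q = genideal FreeAlg {fa_eval p gen_a, fa_eval q gen_b}"

definition W :: "'f::field poly \<Rightarrow> 'f poly \<Rightarrow> (bool list \<Rightarrow> 'f) set ring" where
  "W p q = FreeAlg Quot (W_ideal p q)"

definition W_scalar :: "'f::field poly \<Rightarrow> 'f poly \<Rightarrow> 'f \<Rightarrow> (bool list \<Rightarrow> 'f) set" where
  "W_scalar p q c = W_ideal p q +>\<^bsub>FreeAlg\<^esub> fa_scalar c"

definition W_smult :: "'f::field poly \<Rightarrow> 'f poly \<Rightarrow> 'f \<Rightarrow> (bool list \<Rightarrow> 'f) set \<Rightarrow> (bool list \<Rightarrow> 'f) set" where
  "W_smult p q c X = W_scalar p q c \<otimes>\<^bsub>W p q\<^esub> X"

definition W_alg_endo :: "'f::field poly \<Rightarrow> 'f poly \<Rightarrow> ((bool list \<Rightarrow> 'f) set \<Rightarrow> (bool list \<Rightarrow> 'f) set) \<Rightarrow> bool" where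
  "W_alg_endo p q \<Phi> \<longleftrightarrow> \<Phi> \<in> ring_hom (W p q) (W p q) \<and>
     (\<forall>c. \<forall>X\<in>carrier (W p q). \<Phi> (W_smult p q c X) = W_smult p q c (\<Phi> X))"

definition tr :: "'f::field poly \<Rightarrow> 'f" where
  "tr p = - Polynomial.coeff p 1"

text \<open>Adjunction on the free algebra: the F-linear anti-automorphism with
  a |-> tr(p) - a, b |-> tr(q) - b.  On a word x1...xn it gives xn* ... x1*.\<close>
definition gen_star :: "'f::field poly \<Rightarrow> 'f poly \<Rightarrow> bool \<Rightarrow> bool list \<Rightarrow> 'f" where
  "gen_star p q x = (if x then fa_scalar (tr q) \<ominus>\<^bsub>FreeAlg\<^esub> gen_b
                          else fa_scalar (tr p) \<ominus>\<^bsub>FreeAlg\<^esub> gen_a)"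

definition word_star :: "'f::field poly \<Rightarrow> 'f poly \<Rightarrow> bool list \<Rightarrow> bool list \<Rightarrow> 'f" where
  "word_star p q w = foldr (\<lambda>x r. r \<otimes>\<^bsub>FreeAlg\<^esub> gen_star p q x) w \<one>\<^bsub>FreeAlg\<^esub>"

definition fa_star :: "'f::field poly \<Rightarrow> 'f poly \<Rightarrow> (bool list \<Rightarrow> 'f) \<Rightarrow> bool list \<Rightarrow> 'f" where
  "fa_star p q f = finsum FreeAlg (\<lambda>w. fa_smult (f w) (word_star p q w)) {w. f w \<noteq> 0}"

text \<open>Induced adjunction on W (it is well defined since p(tr p - a) = p(a) etc.).\<close>
definition W_star :: "'f::field poly \<Rightarrow> 'f poly \<Rightarrow> (bool list \<Rightarrow> 'f) set \<Rightarrow> (bool list \<Rightarrow> 'f) set" where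
  "W_star p q X = W_ideal p q +>\<^bsub>FreeAlg\<^esub> fa_star p q (SOME r. r \<in> X)"

end

theory Submission
  imports Defs
begin

definition splits :: "'a list \<Rightarrow> ('a list \<times> 'a list) set" where
  "splits w = {(u,v). u @ v = w}"

lemma splits_img: "splits w = (\<lambda>i. (take i w, drop i w)) ` {..length w}"
proof
  show "splits w \<subseteq> (\<lambda>i. (take i w, drop i w)) ` {..length w}"
  proof
    fix x assume "x \<in> splits w"
    then obtain a b where "x = (a,b)" "w = a @ b" by (auto simp: splits_def)
    then show "x \<in> (\<lambda>i. (take i w, drop i w)) ` {..length w}"
      by (auto intro!: image_eqI[where x="length a"])
  qed
qed (auto simp: splits_def)

lemma finite_splits[simp]: "finite (splits w)"
  by (simp add: splits_img)

lemma fa_mult_splits: "fa_mult f g w = (\<Sum>(u,v)\<in>splits w. f u * g v)"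
proof -
  have "inj_on (\<lambda>i. (take i w, drop i w)) {..length w}"
    by (auto simp: inj_on_def) (metis append_take_drop_id length_take min.absorb2)
  then show ?thesis
    unfolding fa_mult_def splits_img by (simp add: sum.reindex)
qed

definition supp :: "(bool list \<Rightarrow> 'f::field) \<Rightarrow> bool list set" where
  "supp f = {w. f w \<noteq> 0}"

lemma FreeAlg_carrier: "carrier FreeAlg = {f. finite {w. f w \<noteq> 0}}"
  by (simp add: FreeAlg_def)

lemma FreeAlg_simps:
  "carrier FreeAlg = {f. finite {w. f w \<noteq> 0}}"
  "monoid.mult FreeAlg = fa_mult"
  "one FreeAlg = (\<lambda>w. if w = [] then 1 else 0)"
  "zero FreeAlg = (\<lambda>w. 0)"
  "add FreeAlg = (\<lambda>f g w. f w + g w)"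
  by (simp_all add: FreeAlg_def)

lemma fa_mult_assoc: "fa_mult (fa_mult f g) h w = fa_mult f (fa_mult g h) w"
proof -
  define T where "T = {(u,v,z). u @ v @ z = w}"
  have "fa_mult (fa_mult f g) h w = (\<Sum>x\<in>splits w. \<Sum>y\<in>splits (fst x). f (fst y) * g (snd y) * h (snd x))"
    by (simp add: fa_mult_splits sum_distrib_right case_prod_unfold)
  also have "\<dots> = (\<Sum>xy\<in>Sigma (splits w) (\<lambda>x. splits (fst x)). f (fst (snd xy)) * g (snd (snd xy)) * h (snd (fst xy)))"
    by (subst sum.Sigma) (auto simp: case_prod_unfold)
  also have "\<dots> = (\<Sum>t\<in>T. f (fst t) * g (fst (snd t)) * h (snd (snd t)))"
    by (rule sum.reindex_bij_witness[where i="\<lambda>(u,v,z). ((u@v,z),(u,v))" and j="\<lambda>((x,z),(u,v)). (u,v,z)"])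
       (auto simp: T_def splits_def)
  also have "\<dots> = (\<Sum>xy\<in>Sigma (splits w) (\<lambda>x. splits (snd x)). f (fst (fst xy)) * g (fst (snd xy)) * h (snd (snd xy)))"
    by (rule sum.reindex_bij_witness[where j="\<lambda>(u,v,z). ((u,v@z),(v,z))" and i="\<lambda>((u,y),(v,z)). (u,v,z)"])
       (auto simp: T_def splits_def)
  also have "\<dots> = (\<Sum>x\<in>splits w. \<Sum>y\<in>splits (snd x). f (fst x) * g (fst y) * h (snd y))"
    by (subst sum.Sigma) (auto simp: case_prod_unfold)
  also have "\<dots> = fa_mult f (fa_mult g h) w"
    by (simp add: fa_mult_splits sum_distrib_left case_prod_unfold mult.assoc)
  finally show ?thesis .
qed

lemma fa_mult_support: "{w. fa_mult f g w \<noteq> 0} \<subseteq> (\<lambda>(u,v). u @ v) ` ({w. f w \<noteq> 0} \<times> {w. g w \<noteq> 0})"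
proof
  fix w assume "w \<in> {w. fa_mult f g w \<noteq> 0}"
  then have "(\<Sum>(u,v)\<in>splits w. f u * g v) \<noteq> 0" by (simp add: fa_mult_splits)
  then obtain u v where "(u,v) \<in> splits w" "f u * g v \<noteq> 0"
    by (metis (mono_tags, lifting) case_prod_conv sum.neutral surj_pair)
  then show "w \<in> (\<lambda>(u,v). u @ v) ` ({w. f w \<noteq> 0} \<times> {w. g w \<noteq> 0})"
    by (auto simp: splits_def image_iff)
qed

lemma fa_mult_closed: "finite {w. f w \<noteq> 0} \<Longrightarrow> finite {w. g w \<noteq> 0} \<Longrightarrow> finite {w. fa_mult f g w \<noteq> 0}"
  by (rule finite_subset[OF fa_mult_support]) auto

lemma fa_mult_one_left: "fa_mult (\<lambda>w. if w = [] then 1 else 0) g = g"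
proof
  fix w
  have "fa_mult (\<lambda>w. if w = [] then 1 else 0) g w = (\<Sum>i\<le>length w. (if take i w = [] then 1 else 0) * g (drop i w))"
    by (simp add: fa_mult_def)
  also have "\<dots> = (\<Sum>i\<in>{0}. (if take i w = [] then 1 else 0) * g (drop i w))"
    by (rule sum.mono_neutral_right) auto
  finally show "fa_mult (\<lambda>w. if w = [] then 1 else 0) g w = g w" by simp
qed

lemma fa_mult_one_right: "fa_mult f (\<lambda>w. if w = [] then 1 else 0) = f"
proof
  fix w
  have "fa_mult f (\<lambda>w. if w = [] then 1 else 0) w = (\<Sum>i\<le>length w. f (take i w) * (if drop i w = [] then 1 else 0))"
    by (simp add: fa_mult_def)
  also have "\<dots> = (\<Sum>i\<in>{length w}. f (take i w) * (if drop i w = [] then 1 else 0))"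
    by (rule sum.mono_neutral_right) auto
  finally show "fa_mult f (\<lambda>w. if w = [] then 1 else 0) w = f w" by simp
qed

lemma ring_FreeAlg: "ring (FreeAlg :: (bool list \<Rightarrow> 'f::field) ring)"
proof (rule ringI)
  show "abelian_group (FreeAlg :: (bool list \<Rightarrow> 'f::field) ring)"
  proof (rule abelian_groupI, simp_all add: FreeAlg_simps)
    fix x y :: "bool list \<Rightarrow> 'f"
    assume "finite {w. x w \<noteq> 0}" "finite {w. y w \<noteq> 0}"
    then show "finite {w. x w + y w \<noteq> 0}"
      by (rule finite_subset[rotated, OF finite_UnI]) auto
  next
    fix x y z :: "bool list \<Rightarrow> 'f"
    show "(\<lambda>w. x w + y w + z w) = (\<lambda>w. x w + (y w + z w))" by (simp add: add.assoc)
    show "(\<lambda>w. x w + y w) = (\<lambda>w. y w + x w)" by (simp add: add.commute)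
  next
    fix x :: "bool list \<Rightarrow> 'f"
    assume "finite {w. x w \<noteq> 0}"
    then show "\<exists>y. finite {w. y w \<noteq> 0} \<and> (\<lambda>w. y w + x w) = (\<lambda>w. 0)"
      by (intro exI[where x="\<lambda>w. - x w"]) auto
  qed
  show "monoid (FreeAlg :: (bool list \<Rightarrow> 'f::field) ring)"
  proof (rule monoidI, simp_all add: FreeAlg_simps fa_mult_closed fa_mult_one_left fa_mult_one_right)
    fix x y z :: "bool list \<Rightarrow> 'f"
    show "fa_mult (fa_mult x y) z = fa_mult x (fa_mult y z)" by (rule ext, rule fa_mult_assoc)
  qed
  fix x y z :: "bool list \<Rightarrow> 'f"
  show "(x \<oplus>\<^bsub>FreeAlg\<^esub> y) \<otimes>\<^bsub>FreeAlg\<^esub> z = x \<otimes>\<^bsub>FreeAlg\<^esub> z \<oplus>\<^bsub>FreeAlg\<^esub> y \<otimes>\<^bsub>FreeAlg\<^esub> z"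
    by (auto simp: FreeAlg_simps fa_mult_def distrib_right sum.distrib)
  show "z \<otimes>\<^bsub>FreeAlg\<^esub> (x \<oplus>\<^bsub>FreeAlg\<^esub> y) = z \<otimes>\<^bsub>FreeAlg\<^esub> x \<oplus>\<^bsub>FreeAlg\<^esub> z \<otimes>\<^bsub>FreeAlg\<^esub> y"
    by (auto simp: FreeAlg_simps fa_mult_def distrib_left sum.distrib)
qed

datatype 'a m2 = M2 (m11: 'a) (m12: 'a) (m21: 'a) (m22: 'a)

instantiation m2 :: (comm_ring_1) ring_1
begin
definition "0 = M2 0 0 0 0"
definition "1 = M2 1 0 0 1"
definition "x + y = M2 (m11 x + m11 y) (m12 x + m12 y) (m21 x + m21 y) (m22 x + m22 y)"
definition "x - y = M2 (m11 x - m11 y) (m12 x - m12 y) (m21 x - m21 y) (m22 x - m22 y)"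
definition "- x = M2 (- m11 x) (- m12 x) (- m21 x) (- m22 x)"
definition "x * y = M2 (m11 x * m11 y + m12 x * m21 y) (m11 x * m12 y + m12 x * m22 y)
                      (m21 x * m11 y + m22 x * m21 y) (m21 x * m12 y + m22 x * m22 y)"
instance
  by standard (auto simp: zero_m2_def one_m2_def plus_m2_def minus_m2_def uminus_m2_def times_m2_def
      algebra_simps intro: m2.expand)
end

lemma m2_simps[simp]:
  "M2 a b c d + M2 a' b' c' d' = M2 (a+a') (b+b') (c+c') (d+d')"
  "M2 a b c d - M2 a' b' c' d' = M2 (a-a') (b-b') (c-c') (d-d')"
  "- M2 a b c d = M2 (-a) (-b) (-c) (-d)"
  "M2 a b c d * M2 a' b' c' d' = M2 (a*a'+b*c') (a*b'+b*d') (c*a'+d*c') (c*b'+d*d')"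
  by (simp_all add: zero_m2_def one_m2_def plus_m2_def minus_m2_def uminus_m2_def times_m2_def)

lemma m2_01:
  "(0::'a::comm_ring_1 m2) = M2 0 0 0 0"
  "(1::'a::comm_ring_1 m2) = M2 1 0 0 1"
  by (simp_all add: zero_m2_def one_m2_def plus_m2_def minus_m2_def uminus_m2_def times_m2_def)

definition sI :: "'a::comm_ring_1 \<Rightarrow> 'a m2" where "sI c = M2 c 0 0 c"

definition adj :: "'a::comm_ring_1 m2 \<Rightarrow> 'a m2" where
  "adj x = M2 (m22 x) (- m12 x) (- m21 x) (m11 x)"

definition mtr :: "'a::comm_ring_1 m2 \<Rightarrow> 'a" where "mtr x = m11 x + m22 x"
definition mdet :: "'a::comm_ring_1 m2 \<Rightarrow> 'a" where "mdet x = m11 x * m22 x - m12 x * m21 x"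

lemma sI_mult_comm: "sI c * x = x * sI c"
  by (cases x) (simp add: sI_def mult.commute)
lemma sI_add: "sI (a + b) = sI a + sI b" by (simp add: sI_def)
lemma sI_mult: "sI (a * b) = sI a * sI b" by (simp add: sI_def)
lemma sI_0[simp]: "sI 0 = 0" by (simp add: sI_def m2_01)
lemma sI_1[simp]: "sI 1 = 1" by (simp add: sI_def m2_01)

lemma adj_mult: "adj (x * y) = adj y * adj x"
  by (cases x, cases y) (simp add: adj_def algebra_simps)
lemma adj_add: "adj (x + y) = adj x + adj y"
  by (cases x, cases y) (simp add: adj_def algebra_simps)
lemma adj_sI: "adj (sI c * x) = sI c * adj x"
  by (cases x) (simp add: adj_def sI_def algebra_simps)
lemma adj_one[simp]: "adj 1 = 1" by (simp add: adj_def m2_01)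
lemma adj_zero[simp]: "adj 0 = 0" by (simp add: adj_def m2_01)
lemma adj_tr: "adj x = sI (mtr x) - x"
  by (cases x) (simp add: adj_def sI_def mtr_def)
lemma adj_sum: "adj (sum f A) = (\<Sum>a\<in>A. adj (f a))"
proof (induction A rule: infinite_finite_induct)
  case (insert x F)
  then show ?case by (simp add: adj_add)
qed auto

lemma cayley_hamilton: "x * x - sI (mtr x) * x + sI (mdet x) = 0"
  by (cases x) (simp add: sI_def mtr_def mdet_def algebra_simps m2_01)

interpretation FA: ring "FreeAlg :: (bool list \<Rightarrow> 'f::field) ring"
  by (rule ring_FreeAlg)

definition dl :: "bool list \<Rightarrow> bool list \<Rightarrow> 'f::field" where
  "dl u = (\<lambda>w. if w = u then 1 else 0)"

lemma dl_carrier[simp]: "dl u \<in> carrier FreeAlg"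
  by (simp add: dl_def FreeAlg_carrier)

lemma fa_smult_carrier[simp]: "f \<in> carrier FreeAlg \<Longrightarrow> fa_smult c f \<in> carrier FreeAlg"
  by (auto simp: FreeAlg_carrier fa_smult_def intro: rev_finite_subset[of "{w. f w \<noteq> 0}"])

lemma fa_one_dl: "\<one>\<^bsub>FreeAlg\<^esub> = dl []"
  by (simp add: dl_def FreeAlg_simps)
lemma gen_a_dl: "gen_a = dl [False]" by (simp add: gen_a_def dl_def)
lemma gen_b_dl: "gen_b = dl [True]" by (simp add: gen_b_def dl_def)

lemma dl_mult: "dl u \<otimes>\<^bsub>FreeAlg\<^esub> dl v = dl (u @ v)"
proof
  fix w
  have "(\<Sum>(x,y)\<in>splits w. dl u x * dl v y) = (\<Sum>(x,y)\<in>splits w \<inter> {(u,v)}. dl u x * dl v y)"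
    by (rule sum.mono_neutral_right) (auto simp: dl_def split: if_splits)
  also have "\<dots> = dl (u @ v) w"
    by (cases "w = u @ v") (auto simp: dl_def splits_def)
  finally show "(dl u \<otimes>\<^bsub>FreeAlg\<^esub> dl v) w = dl (u @ v) w"
    by (simp add: fa_mult_splits FreeAlg_simps)
qed

lemma smult_mult_left: "fa_smult c f \<otimes>\<^bsub>FreeAlg\<^esub> g = fa_smult c (f \<otimes>\<^bsub>FreeAlg\<^esub> g)"
  by (auto simp: FreeAlg_simps fa_smult_def fa_mult_def sum_distrib_left mult.assoc)
lemma smult_mult_right: "f \<otimes>\<^bsub>FreeAlg\<^esub> fa_smult c g = fa_smult c (f \<otimes>\<^bsub>FreeAlg\<^esub> g)"
  by (auto simp: FreeAlg_simps fa_smult_def fa_mult_def sum_distrib_left mult.left_commute)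

lemma fa_scalar_mult_left: "f \<in> carrier FreeAlg \<Longrightarrow> fa_scalar c \<otimes>\<^bsub>FreeAlg\<^esub> f = fa_smult c f"
  by (simp add: fa_scalar_def smult_mult_left FA.l_one)
lemma fa_scalar_mult_right: "f \<in> carrier FreeAlg \<Longrightarrow> f \<otimes>\<^bsub>FreeAlg\<^esub> fa_scalar c = fa_smult c f"
  by (simp add: fa_scalar_def smult_mult_right FA.r_one)
lemma fa_scalar_carrier[simp]: "fa_scalar c \<in> carrier FreeAlg"
  by (simp add: fa_scalar_def FA.one_closed)

lemma finsum_eval:
  assumes "finite A" "g \<in> A \<rightarrow> carrier FreeAlg"
  shows "finsum FreeAlg g A w = (\<Sum>a\<in>A. g a w)"
  using assms
proof (induction A rule: finite_induct)
  case empty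
  then show ?case by (simp add: FA.finsum_empty FreeAlg_simps)
next
  case (insert x F)
  then have "finsum FreeAlg g (insert x F) = g x \<oplus>\<^bsub>FreeAlg\<^esub> finsum FreeAlg g F"
    by (intro FA.finsum_insert) auto
  with insert show ?case by (simp add: FreeAlg_simps del: FreeAlg_carrier)
qed

lemma fa_decomp:
  assumes "f \<in> carrier FreeAlg"
  shows "f = finsum FreeAlg (\<lambda>w. fa_smult (f w) (dl w)) {w. f w \<noteq> 0}"
proof
  fix w
  have fin: "finite {w. f w \<noteq> 0}" using assms by (simp add: FreeAlg_carrier)
  have "finsum FreeAlg (\<lambda>w. fa_smult (f w) (dl w)) {w. f w \<noteq> 0} w
        = (\<Sum>u\<in>{w. f w \<noteq> 0}. fa_smult (f u) (dl u) w)"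
    by (rule finsum_eval[OF fin]) auto
  also have "\<dots> = f w"
    by (simp add: fa_smult_def dl_def if_distrib sum.delta'[OF fin] cong: if_cong)
  finally show "f w = finsum FreeAlg (\<lambda>w. fa_smult (f w) (dl w)) {w. f w \<noteq> 0} w" by simp
qed

definition fa_hom :: "((bool list \<Rightarrow> 'f::field) \<Rightarrow> 'f poly m2) \<Rightarrow> bool" where
  "fa_hom h \<longleftrightarrow> (\<forall>f\<in>carrier FreeAlg. \<forall>g\<in>carrier FreeAlg.
       h (f \<oplus>\<^bsub>FreeAlg\<^esub> g) = h f + h g \<and> h (f \<otimes>\<^bsub>FreeAlg\<^esub> g) = h f * h g) \<and>
     h \<one>\<^bsub>FreeAlg\<^esub> = 1 \<and> (\<forall>c. \<forall>f\<in>carrier FreeAlg. h (fa_smult c f) = sI [:c:] * h f)"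

lemma fa_homD:
  assumes "fa_hom h"
  shows "\<And>f g. f \<in> carrier FreeAlg \<Longrightarrow> g \<in> carrier FreeAlg \<Longrightarrow> h (f \<oplus>\<^bsub>FreeAlg\<^esub> g) = h f + h g"
    and "\<And>f g. f \<in> carrier FreeAlg \<Longrightarrow> g \<in> carrier FreeAlg \<Longrightarrow> h (f \<otimes>\<^bsub>FreeAlg\<^esub> g) = h f * h g"
    and "h \<one>\<^bsub>FreeAlg\<^esub> = 1"
    and "\<And>c f. f \<in> carrier FreeAlg \<Longrightarrow> h (fa_smult c f) = sI [:c:] * h f"
  using assms unfolding fa_hom_def by blast+

lemma fa_hom_zero:
  assumes "fa_hom h" shows "h \<zero>\<^bsub>FreeAlg\<^esub> = 0"
proof -
  have "h \<zero>\<^bsub>FreeAlg\<^esub> = h (\<zero>\<^bsub>FreeAlg\<^esub> \<oplus>\<^bsub>FreeAlg\<^esub> \<zero>\<^bsub>FreeAlg\<^esub>)" by (simp add: FA.r_zero)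
  also have "\<dots> = h \<zero>\<^bsub>FreeAlg\<^esub> + h \<zero>\<^bsub>FreeAlg\<^esub>" by (rule fa_homD(1)[OF assms]) auto
  finally show ?thesis by simp
qed

lemma fa_hom_finsum:
  assumes "fa_hom h" "finite A" "g \<in> A \<rightarrow> carrier FreeAlg"
  shows "h (finsum FreeAlg g A) = (\<Sum>a\<in>A. h (g a))"
  using assms(2,3)
proof (induction A rule: finite_induct)
  case empty
  then show ?case by (simp add: FA.finsum_empty fa_hom_zero[OF assms(1)])
next
  case (insert x F)
  then have "finsum FreeAlg g (insert x F) = g x \<oplus>\<^bsub>FreeAlg\<^esub> finsum FreeAlg g F"
    by (intro FA.finsum_insert) auto
  moreover have "h (g x \<oplus>\<^bsub>FreeAlg\<^esub> finsum FreeAlg g F) = h (g x) + h (finsum FreeAlg g F)"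
    using insert by (intro fa_homD(1)[OF assms(1)] FA.finsum_closed) auto
  ultimately show ?case using insert by simp
qed

lemma fa_hom_decomp:
  assumes "fa_hom h" "f \<in> carrier FreeAlg"
  shows "h f = (\<Sum>w\<in>{w. f w \<noteq> 0}. sI [:f w:] * h (dl w))"
proof -
  have fin: "finite {w. f w \<noteq> 0}" using assms(2) by (simp add: FreeAlg_carrier)
  have "h f = h (finsum FreeAlg (\<lambda>w. fa_smult (f w) (dl w)) {w. f w \<noteq> 0})"
    using fa_decomp[OF assms(2)] by simp
  also have "\<dots> = (\<Sum>w\<in>{w. f w \<noteq> 0}. h (fa_smult (f w) (dl w)))"
    using assms fin by (intro fa_hom_finsum) auto
  also have "\<dots> = (\<Sum>w\<in>{w. f w \<noteq> 0}. sI [:f w:] * h (dl w))"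
    using assms(1) by (simp add: fa_homD(4))
  finally show ?thesis .
qed

lemma fa_hom_eqI:
  assumes "fa_hom h1" "fa_hom h2" "h1 gen_a = h2 gen_a" "h1 gen_b = h2 gen_b" "f \<in> carrier FreeAlg"
  shows "h1 f = h2 f"
proof -
  have "h1 (dl w) = h2 (dl w)" for w
  proof (induction w)
    case Nil
    then show ?case using assms(1,2) by (simp add: fa_one_dl[symmetric] fa_homD(3))
  next
    case (Cons x w)
    have e: "dl (x # w) = dl [x] \<otimes>\<^bsub>FreeAlg\<^esub> dl w" by (simp add: dl_mult)
    have "h1 (dl [x]) = h2 (dl [x])" using assms by (cases x) (simp_all add: gen_a_dl gen_b_dl)
    then show ?case unfolding e using Cons
      by (simp add: fa_homD(2)[OF assms(1)] fa_homD(2)[OF assms(2)])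
  qed
  then show ?thesis
    unfolding fa_hom_decomp[OF assms(1) assms(5)] fa_hom_decomp[OF assms(2) assms(5)] by simp
qed

lemma addhom_finsum:
  assumes "\<And>f g. f \<in> carrier FreeAlg \<Longrightarrow> g \<in> carrier FreeAlg \<Longrightarrow> h (f \<oplus>\<^bsub>FreeAlg\<^esub> g) = h f + h g"
    and "h \<zero>\<^bsub>FreeAlg\<^esub> = (0 :: 'a::comm_monoid_add)"
    and "finite A" "g \<in> A \<rightarrow> carrier (FreeAlg :: (bool list \<Rightarrow> 'f::field) ring)"
  shows "h (finsum FreeAlg g A) = (\<Sum>a\<in>A. h (g a))"
  using assms(3,4)
proof (induction A rule: finite_induct)
  case empty
  then show ?case by (simp add: FA.finsum_empty assms(2))
next
  case (insert x F)
  then have "finsum FreeAlg g (insert x F) = g x \<oplus>\<^bsub>FreeAlg\<^esub> finsum FreeAlg g F"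
    by (intro FA.finsum_insert) auto
  moreover have "h (g x \<oplus>\<^bsub>FreeAlg\<^esub> finsum FreeAlg g F) = h (g x) + h (finsum FreeAlg g F)"
    using insert by (intro assms(1) FA.finsum_closed) auto
  ultimately show ?case using insert by simp
qed

lemma gen_star_carrier[simp]: "gen_star p q x \<in> carrier FreeAlg"
  by (simp add: gen_star_def gen_a_dl gen_b_dl FA.minus_closed)

lemma word_star_Cons: "word_star p q (x # w) = word_star p q w \<otimes>\<^bsub>FreeAlg\<^esub> gen_star p q x"
  by (simp add: word_star_def)

lemma word_star_carrier[simp]: "word_star p q w \<in> carrier FreeAlg"
  by (induction w) (simp_all add: word_star_Cons, simp add: word_star_def FA.one_closed)

lemma fa_hom_star:
  assumes h: "fa_hom h"
    and ha: "adj (h gen_a) = h (gen_star p q False)"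
    and hb: "adj (h gen_b) = h (gen_star p q True)"
    and f: "f \<in> carrier FreeAlg"
  shows "h (fa_star p q f) = adj (h f)"
proof -
  have ws: "h (word_star p q w) = adj (h (dl w))" for w
  proof (induction w)
    case Nil
    then show ?case using fa_homD(3)[OF h] by (simp add: word_star_def fa_one_dl)
  next
    case (Cons x w)
    have e: "dl (x # w) = dl [x] \<otimes>\<^bsub>FreeAlg\<^esub> dl w" by (simp add: dl_mult)
    have "adj (h (dl [x])) = h (gen_star p q x)" using ha hb by (cases x) (simp_all add: gen_a_dl gen_b_dl)
    then show ?case using Cons
      by (simp add: e word_star_Cons fa_homD(2)[OF h] adj_mult)
  qed
  have fin: "finite {w. f w \<noteq> 0}" using f by (simp add: FreeAlg_carrier)
  have "h (fa_star p q f) = (\<Sum>w\<in>{w. f w \<noteq> 0}. h (fa_smult (f w) (word_star p q w)))"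
    unfolding fa_star_def using fin by (intro fa_hom_finsum[OF h]) auto
  also have "\<dots> = (\<Sum>w\<in>{w. f w \<noteq> 0}. adj (sI [:f w:] * h (dl w)))"
    by (simp add: fa_homD(4)[OF h] ws adj_sI)
  also have "\<dots> = adj (h f)"
    by (simp add: adj_sum[symmetric] fa_hom_decomp[OF h f])
  finally show ?thesis .
qed

definition mw :: "(bool \<Rightarrow> 'a::ring_1) \<Rightarrow> bool list \<Rightarrow> 'a" where
  "mw G w = foldr (\<lambda>x M. G x * M) w 1"

lemma mw_append: "mw G (u @ v) = mw G u * mw G v"
  by (induction u) (simp_all add: mw_def mult.assoc)

lemma sI_pconst_add: "sI [:a + b:] = sI [:a:] + sI [:b::'a::comm_ring_1:]" by (simp add: sI_def)
lemma sI_pconst_mult: "sI [:a * b:] = sI [:a:] * sI [:b::'a::comm_ring_1:]" by (simp add: sI_def)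

definition rep :: "(bool \<Rightarrow> 'f::field poly m2) \<Rightarrow> (bool list \<Rightarrow> 'f) \<Rightarrow> 'f poly m2" where
  "rep G f = (\<Sum>w\<in>{w. f w \<noteq> 0}. sI [:f w:] * mw G w)"

lemma rep_superset:
  assumes "finite A" "{w. f w \<noteq> 0} \<subseteq> A"
  shows "rep G f = (\<Sum>w\<in>A. sI [:f w:] * mw G w)"
  unfolding rep_def by (rule sum.mono_neutral_left) (use assms in auto)

lemma rep_add:
  assumes "f \<in> carrier FreeAlg" "g \<in> carrier FreeAlg"
  shows "rep G (f \<oplus>\<^bsub>FreeAlg\<^esub> g) = rep G f + rep G g"
proof -
  define A where "A = {w. f w \<noteq> 0} \<union> {w. g w \<noteq> 0}"
  have fin: "finite A" using assms by (simp add: A_def FreeAlg_carrier)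
  have "rep G (f \<oplus>\<^bsub>FreeAlg\<^esub> g) = (\<Sum>w\<in>A. sI [:(f \<oplus>\<^bsub>FreeAlg\<^esub> g) w:] * mw G w)"
    by (rule rep_superset[OF fin]) (auto simp: A_def FreeAlg_simps)
  also have "\<dots> = (\<Sum>w\<in>A. sI [:f w + g w:] * mw G w)"
    by (simp add: FreeAlg_simps)
  also have "\<dots> = (\<Sum>w\<in>A. sI [:f w:] * mw G w) + (\<Sum>w\<in>A. sI [:g w:] * mw G w)"
    by (simp add: sum.distrib[symmetric] sI_pconst_add distrib_right)
  also have "\<dots> = rep G f + rep G g"
    using fin by (simp add: rep_superset[of A f] rep_superset[of A g] A_def)
  finally show ?thesis .
qed

lemma rep_zero: "rep G \<zero>\<^bsub>FreeAlg\<^esub> = 0"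
  by (simp add: rep_def FreeAlg_simps)

lemma rep_smult:
  assumes "f \<in> carrier FreeAlg"
  shows "rep G (fa_smult c f) = sI [:c:] * rep G f"
proof -
  have fin: "finite {w. f w \<noteq> 0}" using assms by (simp add: FreeAlg_carrier)
  have "rep G (fa_smult c f) = (\<Sum>w\<in>{w. f w \<noteq> 0}. sI [:fa_smult c f w:] * mw G w)"
    by (rule rep_superset[OF fin]) (auto simp: fa_smult_def)
  also have "\<dots> = (\<Sum>w\<in>{w. f w \<noteq> 0}. sI [:c * f w:] * mw G w)"
    by (simp add: fa_smult_def)
  also have "\<dots> = sI [:c:] * rep G f"
    by (simp add: rep_def sum_distrib_left sI_pconst_mult mult.assoc)
  finally show ?thesis .
qed

lemma rep_dl: "rep G (dl w) = mw G w"
proof -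
  have "rep G (dl w) = (\<Sum>v\<in>{w}. sI [:dl w v:] * mw G v)"
    by (rule rep_superset) (auto simp: dl_def)
  then show ?thesis by (simp add: dl_def pCons_one)
qed

lemma rep_finsum:
  assumes "finite A" "g \<in> A \<rightarrow> carrier FreeAlg"
  shows "rep G (finsum FreeAlg g A) = (\<Sum>a\<in>A. rep G (g a))"
  by (rule addhom_finsum[OF rep_add rep_zero assms])

lemma rep_decomp:
  assumes "f \<in> carrier FreeAlg" and that: "g \<in> carrier FreeAlg"
  shows "f \<otimes>\<^bsub>FreeAlg\<^esub> g = finsum FreeAlg (\<lambda>w. fa_smult (f w) (dl w \<otimes>\<^bsub>FreeAlg\<^esub> g)) {w. f w \<noteq> 0}"
proof -
  have fin: "finite {w. f w \<noteq> 0}" using assms by (simp add: FreeAlg_carrier)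
  have "f \<otimes>\<^bsub>FreeAlg\<^esub> g = finsum FreeAlg (\<lambda>w. fa_smult (f w) (dl w)) {w. f w \<noteq> 0} \<otimes>\<^bsub>FreeAlg\<^esub> g"
    using fa_decomp[OF assms(1)] by simp
  also have "\<dots> = finsum FreeAlg (\<lambda>w. fa_smult (f w) (dl w) \<otimes>\<^bsub>FreeAlg\<^esub> g) {w. f w \<noteq> 0}"
    using fin that by (intro FA.finsum_ldistr) auto
  finally show ?thesis by (simp add: smult_mult_left)
qed

lemma rep_mult:
  assumes f: "f \<in> carrier FreeAlg" and g: "g \<in> carrier FreeAlg"
  shows "rep G (f \<otimes>\<^bsub>FreeAlg\<^esub> g) = rep G f * rep G g"
proof -
  have finf: "finite {w. f w \<noteq> 0}" using f by (simp add: FreeAlg_carrier)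
  have fing: "finite {w. g w \<noteq> 0}" using g by (simp add: FreeAlg_carrier)
  have dlg: "rep G (dl u \<otimes>\<^bsub>FreeAlg\<^esub> g) = mw G u * rep G g" for u
  proof -
    have "dl u \<otimes>\<^bsub>FreeAlg\<^esub> g = dl u \<otimes>\<^bsub>FreeAlg\<^esub> finsum FreeAlg (\<lambda>w. fa_smult (g w) (dl w)) {w. g w \<noteq> 0}"
      using fa_decomp[OF g] by simp
    also have "\<dots> = finsum FreeAlg (\<lambda>w. dl u \<otimes>\<^bsub>FreeAlg\<^esub> fa_smult (g w) (dl w)) {w. g w \<noteq> 0}"
      using fing by (intro FA.finsum_rdistr) auto
    finally have "rep G (dl u \<otimes>\<^bsub>FreeAlg\<^esub> g) = (\<Sum>w\<in>{w. g w \<noteq> 0}. rep G (dl u \<otimes>\<^bsub>FreeAlg\<^esub> fa_smult (g w) (dl w)))"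
      using fing by (simp add: rep_finsum FA.m_closed)
    also have "\<dots> = (\<Sum>w\<in>{w. g w \<noteq> 0}. mw G u * (sI [:g w:] * mw G w))"
      by (simp add: smult_mult_right dl_mult rep_smult FA.m_closed rep_dl mw_append sI_mult_comm mult.assoc)
    also have "\<dots> = mw G u * rep G g"
      by (simp add: rep_def sum_distrib_left)
    finally show ?thesis .
  qed
  have "rep G (f \<otimes>\<^bsub>FreeAlg\<^esub> g) = (\<Sum>w\<in>{w. f w \<noteq> 0}. rep G (fa_smult (f w) (dl w \<otimes>\<^bsub>FreeAlg\<^esub> g)))"
    unfolding rep_decomp[OF f g] using finf g by (simp add: rep_finsum FA.m_closed)
  also have "\<dots> = (\<Sum>w\<in>{w. f w \<noteq> 0}. sI [:f w:] * mw G w * rep G g)"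
    using g by (simp add: rep_smult FA.m_closed dlg mult.assoc)
  also have "\<dots> = rep G f * rep G g"
    by (simp add: rep_def sum_distrib_right)
  finally show ?thesis .
qed

lemma rep_one: "rep G \<one>\<^bsub>FreeAlg\<^esub> = 1"
  by (simp add: fa_one_dl rep_dl mw_def)

lemma rep_fa_hom: "fa_hom (rep G)"
  unfolding fa_hom_def by (simp add: rep_add rep_mult rep_one rep_smult)

lemma rep_gen: "rep G gen_a = G False" "rep G gen_b = G True"
  by (simp_all add: gen_a_dl gen_b_dl rep_dl mw_def)

lemma fa_hom_pow:
  assumes "fa_hom h" "x \<in> carrier FreeAlg"
  shows "h (x [^]\<^bsub>FreeAlg\<^esub> (n::nat)) = (h x) ^ n"
  by (induction n) (simp_all add: fa_homD(2,3)[OF assms(1)] assms(2) FA.nat_pow_closed power_commutes)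

lemma fa_eval_finsum:
  assumes "x \<in> carrier FreeAlg"
  shows "fa_eval P x = finsum FreeAlg (\<lambda>i. fa_smult (Polynomial.coeff P i) (x [^]\<^bsub>FreeAlg\<^esub> i)) {..degree P}"
proof
  fix w
  show "fa_eval P x w = finsum FreeAlg (\<lambda>i. fa_smult (Polynomial.coeff P i) (x [^]\<^bsub>FreeAlg\<^esub> i)) {..degree P} w"
    using assms by (subst finsum_eval) (auto simp: FA.nat_pow_closed, simp add: fa_eval_def fa_smult_def)
qed

lemma fa_eval_carrier:
  assumes "x \<in> carrier FreeAlg"
  shows "fa_eval P x \<in> carrier FreeAlg"
  unfolding fa_eval_finsum[OF assms] using assms by (intro FA.finsum_closed) (auto simp: FA.nat_pow_closed)

lemma fa_hom_eval:
  assumes "fa_hom h" "x \<in> carrier FreeAlg"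
  shows "h (fa_eval P x) = (\<Sum>i\<le>degree P. sI [:Polynomial.coeff P i:] * (h x) ^ i)"
  unfolding fa_eval_finsum[OF assms(2)] using assms
  by (subst fa_hom_finsum) (auto simp: FA.nat_pow_closed fa_homD(4) fa_hom_pow)

lemma fa_hom_neg:
  assumes "fa_hom h" "f \<in> carrier FreeAlg"
  shows "h (\<ominus>\<^bsub>FreeAlg\<^esub> f) = - h f"
proof -
  have "h (\<ominus>\<^bsub>FreeAlg\<^esub> f) + h f = h (\<ominus>\<^bsub>FreeAlg\<^esub> f \<oplus>\<^bsub>FreeAlg\<^esub> f)"
    using assms by (simp add: fa_homD(1) FA.a_inv_closed)
  also have "\<dots> = 0" using assms by (simp add: FA.l_neg fa_hom_zero)
  finally show ?thesis by (simp add: eq_neg_iff_add_eq_0)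
qed

lemma fa_hom_kernel_ideal:
  fixes h :: "(bool list \<Rightarrow> 'f::field) \<Rightarrow> 'f poly m2"
  assumes "fa_hom h"
  shows "ideal {f \<in> carrier FreeAlg. h f = 0} FreeAlg"
proof (rule idealI[OF ring_FreeAlg])
  show "subgroup {f \<in> carrier FreeAlg. h f = 0} (add_monoid FreeAlg)"
    apply (rule FA.add.subgroupI)
    using fa_hom_zero[OF assms] FA.zero_closed fa_hom_neg[OF assms] FA.a_inv_closed fa_homD(1)[OF assms] FA.a_closed
    by (auto simp: a_inv_def[symmetric])
next
  fix a x :: "bool list \<Rightarrow> 'f" assume "a \<in> {f \<in> carrier FreeAlg. h f = 0}" "x \<in> carrier FreeAlg"
  then show "x \<otimes>\<^bsub>FreeAlg\<^esub> a \<in> {f \<in> carrier FreeAlg. h f = 0}"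
    "a \<otimes>\<^bsub>FreeAlg\<^esub> x \<in> {f \<in> carrier FreeAlg. h f = 0}"
    using fa_homD(2)[OF assms] by (simp_all add: FA.m_closed)
qed

lemma gen_carrier[simp]: "gen_a \<in> carrier FreeAlg" "gen_b \<in> carrier FreeAlg"
  by (simp_all add: gen_a_dl gen_b_dl)

lemma W_ideal_sub_ker:
  assumes "fa_hom h" "h (fa_eval p gen_a) = 0" "h (fa_eval q gen_b) = 0"
  shows "W_ideal p q \<subseteq> {f \<in> carrier FreeAlg. h f = 0}"
  unfolding W_ideal_def
  by (rule FA.genideal_minimal[OF fa_hom_kernel_ideal[OF assms(1)]])
     (use assms in \<open>auto simp: fa_eval_carrier\<close>)

lemma W_ideal_ideal: "ideal (W_ideal p q) FreeAlg"
  unfolding W_ideal_def by (rule FA.genideal_ideal) (auto simp: fa_eval_carrier)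

locale WS =
  fixes p q :: "'f::field poly"
  assumes lp: "lead_coeff p = 1" and dp: "degree p = 2"
    and lq: "lead_coeff q = 1" and dq: "degree q = 2"
begin

definition "p0 = Polynomial.coeff p 0"
definition "p1 = Polynomial.coeff p 1"
definition "q0 = Polynomial.coeff q 0"
definition "q1 = Polynomial.coeff q 1"
definition "Xp = ([:0,1:] :: 'f poly)"
definition "A0 = M2 0 (-[:p0:]) 1 (-[:p1:])"
definition "B0 = M2 Xp (-(Xp*Xp + [:q1:]*Xp + [:q0:])) 1 (-[:q1:] - Xp)"
definition "Gm x = (if x then B0 else A0)"

abbreviation "psi \<equiv> rep Gm"
abbreviation "II \<equiv> W_ideal p q"

lemma cp2: "Polynomial.coeff p 2 = 1" using lp dp by simp
lemma cq2: "Polynomial.coeff q 2 = 1" using lq dq by simp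

lemma psi_eval_a: "psi (fa_eval p gen_a) = 0"
proof -
  have "psi (fa_eval p gen_a) = (\<Sum>i\<le>2. sI [:Polynomial.coeff p i:] * A0 ^ i)"
    unfolding fa_hom_eval[OF rep_fa_hom gen_carrier(1)] rep_gen by (simp add: Gm_def dp)
  also have "\<dots> = sI [:p0:] + sI [:p1:] * A0 + A0 * A0"
    by (simp add: numeral_2_eq_2 cp2[unfolded numeral_2_eq_2] p0_def p1_def pCons_one power2_eq_square)
  also have "\<dots> = 0"
    by (simp add: A0_def sI_def m2_01 algebra_simps)
  finally show ?thesis .
qed

lemma psi_eval_b: "psi (fa_eval q gen_b) = 0"
proof -
  have "psi (fa_eval q gen_b) = (\<Sum>i\<le>2. sI [:Polynomial.coeff q i:] * B0 ^ i)"
    unfolding fa_hom_eval[OF rep_fa_hom gen_carrier(2)] rep_gen by (simp add: Gm_def dq)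
  also have "\<dots> = sI [:q0:] + sI [:q1:] * B0 + B0 * B0"
    by (simp add: numeral_2_eq_2 cq2[unfolded numeral_2_eq_2] q0_def q1_def pCons_one power2_eq_square)
  also have "\<dots> = 0"
    by (simp add: B0_def sI_def m2_01 algebra_simps)
  finally show ?thesis .
qed

lemma II_ker: "f \<in> II \<Longrightarrow> psi f = 0"
  using W_ideal_sub_ker[OF rep_fa_hom psi_eval_a psi_eval_b] by blast

sublocale Id: ideal II FreeAlg by (rule W_ideal_ideal)

lemma W_ring: "ring (W p q)"
  unfolding W_def by (rule Id.quotient_is_ring)

lemma pi_hom: "(\<lambda>f. II +>\<^bsub>FreeAlg\<^esub> f) \<in> ring_hom FreeAlg (W p q)"
  unfolding W_def by (rule Id.rcos_ring_hom)

lemma W_carrier: "carrier (W p q) = (\<lambda>f. II +>\<^bsub>FreeAlg\<^esub> f) ` carrier FreeAlg"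
  unfolding W_def FactRing_def A_RCOSETS_def' by auto

lemma W_zero: "\<zero>\<^bsub>W p q\<^esub> = II"
  unfolding W_def FactRing_def by simp

definition "psib X = psi (SOME r. r \<in> X)"

lemma psib_pi:
  assumes "f \<in> carrier FreeAlg"
  shows "psib (II +>\<^bsub>FreeAlg\<^esub> f) = psi f"
proof -
  have "f \<in> II +>\<^bsub>FreeAlg\<^esub> f" using assms by (rule Id.a_rcos_self)
  then have "(SOME r. r \<in> II +>\<^bsub>FreeAlg\<^esub> f) \<in> II +>\<^bsub>FreeAlg\<^esub> f" by (rule someI[of "\<lambda>r. r \<in> II +>\<^bsub>FreeAlg\<^esub> f"])
  then obtain i where i: "i \<in> II" "(SOME r. r \<in> II +>\<^bsub>FreeAlg\<^esub> f) = i \<oplus>\<^bsub>FreeAlg\<^esub> f"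
    unfolding a_r_coset_def' by auto
  have "i \<in> carrier FreeAlg" using i(1) Id.a_subset by blast
  then show ?thesis
    unfolding psib_def i(2) using assms i(1)
    by (simp add: rep_add II_ker)
qed

lemma pi_eq_iff:
  assumes "f \<in> carrier FreeAlg" "g \<in> carrier FreeAlg"
  shows "(II +>\<^bsub>FreeAlg\<^esub> f = II +>\<^bsub>FreeAlg\<^esub> g) \<longleftrightarrow> f \<ominus>\<^bsub>FreeAlg\<^esub> g \<in> II"
  using assms
  by (metis Id.a_rcos_module_minus Id.a_repr_independence' Id.a_repr_independenceD ring_FreeAlg)

end

lemma fa_mult_addL: "fa_mult (\<lambda>w. f w + g w) h = (\<lambda>w. fa_mult f h w + fa_mult g h w)"
  by (auto simp: fa_mult_def distrib_right sum.distrib)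
lemma fa_mult_addR: "fa_mult h (\<lambda>w. f w + g w) = (\<lambda>w. fa_mult h f w + fa_mult h g w)"
  by (auto simp: fa_mult_def distrib_left sum.distrib)
lemma fa_mult_diffL: "fa_mult (\<lambda>w. f w - g w) h = (\<lambda>w. fa_mult f h w - fa_mult g h w)"
  by (auto simp: fa_mult_def left_diff_distrib sum_subtractf)
lemma fa_mult_diffR: "fa_mult h (\<lambda>w. f w - g w) = (\<lambda>w. fa_mult h f w - fa_mult h g w)"
  by (auto simp: fa_mult_def right_diff_distrib sum_subtractf)
lemma fa_mult_cmulL: "fa_mult (\<lambda>w. c * f w) h = (\<lambda>w. c * fa_mult f h w)"
  by (auto simp: fa_mult_def sum_distrib_left mult.assoc)
lemma fa_mult_cmulR: "fa_mult h (\<lambda>w. c * f w) = (\<lambda>w. c * fa_mult h f w)"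
  by (auto simp: fa_mult_def sum_distrib_left mult.left_commute)
lemma fa_mult_negL: "fa_mult (\<lambda>w. - f w) h = (\<lambda>w. - fa_mult f h w)"
  by (auto simp: fa_mult_def sum_negf)
lemma fa_mult_negR: "fa_mult h (\<lambda>w. - f w) = (\<lambda>w. - fa_mult h f w)"
  by (auto simp: fa_mult_def sum_negf)
lemma fa_mult_dl: "fa_mult (dl u) (dl v) = dl (u @ v)"
  using dl_mult by (simp add: FreeAlg_simps)

lemmas fa_mult_simps = fa_mult_addL fa_mult_addR fa_mult_diffL fa_mult_diffR
  fa_mult_cmulL fa_mult_cmulR fa_mult_dl fa_mult_negL fa_mult_negR

lemma fa_neg: "f \<in> carrier FreeAlg \<Longrightarrow> \<ominus>\<^bsub>FreeAlg\<^esub> f = (\<lambda>w. - f w)"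
  by (rule FA.minus_equality) (auto simp: FreeAlg_simps intro: rev_finite_subset[of "{w. f w \<noteq> 0}"])

lemma fa_minus: "f \<in> carrier FreeAlg \<Longrightarrow> g \<in> carrier FreeAlg \<Longrightarrow> f \<ominus>\<^bsub>FreeAlg\<^esub> g = (\<lambda>w. f w - g w)"
  by (simp add: a_minus_def fa_neg FreeAlg_simps)

lemma gen_a_pow: "gen_a [^]\<^bsub>FreeAlg\<^esub> (n::nat) = dl (replicate n False)"
  by (induction n) (simp_all add: fa_one_dl gen_a_dl dl_mult replicate_append_same[symmetric])
lemma gen_b_pow: "gen_b [^]\<^bsub>FreeAlg\<^esub> (n::nat) = dl (replicate n True)"
  by (induction n) (simp_all add: fa_one_dl gen_b_dl dl_mult replicate_append_same[symmetric])

lemma fa_scalar_pw: "fa_scalar c = (\<lambda>w. c * dl [] w)"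
  by (simp add: fa_scalar_def fa_smult_def fa_one_dl)

context WS
begin

lemma p_eval: "fa_eval p gen_a = (\<lambda>w. p0 * dl [] w + p1 * dl [False] w + dl [False, False] w)"
  by (rule ext) (simp add: fa_eval_def dp gen_a_pow numeral_2_eq_2 cp2[unfolded numeral_2_eq_2] p0_def p1_def)
lemma q_eval: "fa_eval q gen_b = (\<lambda>w. q0 * dl [] w + q1 * dl [True] w + dl [True, True] w)"
  by (rule ext) (simp add: fa_eval_def dq gen_b_pow numeral_2_eq_2 cq2[unfolded numeral_2_eq_2] q0_def q1_def)

lemma p_eval_dl: "fa_eval p (dl [False]) = (\<lambda>w. p0 * dl [] w + p1 * dl [False] w + dl [False, False] w)"
  using p_eval by (simp add: gen_a_dl)
lemma q_eval_dl: "fa_eval q (dl [True]) = (\<lambda>w. q0 * dl [] w + q1 * dl [True] w + dl [True, True] w)"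
  using q_eval by (simp add: gen_b_dl)

lemma Pa_in: "fa_eval p gen_a \<in> II"
  using FA.genideal_self[of "{fa_eval p gen_a, fa_eval q gen_b}"]
  unfolding W_ideal_def by (auto simp: fa_eval_carrier)
lemma Pb_in: "fa_eval q gen_b \<in> II"
  using FA.genideal_self[of "{fa_eval p gen_a, fa_eval q gen_b}"]
  unfolding W_ideal_def by (auto simp: fa_eval_carrier)

sublocale Wr: ring "W p q" by (rule W_ring)

lemma II_add: "x \<in> II \<Longrightarrow> y \<in> II \<Longrightarrow> x \<oplus>\<^bsub>FreeAlg\<^esub> y \<in> II"
  using additive_subgroup.a_closed[OF Id.is_additive_subgroup] .
lemma II_neg: "x \<in> II \<Longrightarrow> \<ominus>\<^bsub>FreeAlg\<^esub> x \<in> II"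
  using additive_subgroup.a_inv_closed[OF Id.is_additive_subgroup] .

abbreviation pi where "pi f \<equiv> II +>\<^bsub>FreeAlg\<^esub> f"

lemma pi_carrier: "f \<in> carrier FreeAlg \<Longrightarrow> pi f \<in> carrier (W p q)"
  using ring_hom_closed[OF pi_hom] .
lemma pi_add: "f \<in> carrier FreeAlg \<Longrightarrow> g \<in> carrier FreeAlg \<Longrightarrow> pi (f \<oplus>\<^bsub>FreeAlg\<^esub> g) = pi f \<oplus>\<^bsub>W p q\<^esub> pi g"
  using ring_hom_add[OF pi_hom] .
lemma pi_mult: "f \<in> carrier FreeAlg \<Longrightarrow> g \<in> carrier FreeAlg \<Longrightarrow> pi (f \<otimes>\<^bsub>FreeAlg\<^esub> g) = pi f \<otimes>\<^bsub>W p q\<^esub> pi g"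
  using ring_hom_mult[OF pi_hom] .
lemma pi_one: "pi \<one>\<^bsub>FreeAlg\<^esub> = \<one>\<^bsub>W p q\<^esub>"
  using ring_hom_one[OF pi_hom] .
lemma pi_zero: "pi \<zero>\<^bsub>FreeAlg\<^esub> = \<zero>\<^bsub>W p q\<^esub>"
  using ring_hom_zero[OF pi_hom ring_FreeAlg W_ring] .
lemma pi_in_II: "f \<in> II \<Longrightarrow> pi f = \<zero>\<^bsub>W p q\<^esub>"
  by (simp add: W_zero Id.a_rcos_const)

lemma pi_eqI:
  assumes "f \<in> carrier FreeAlg" "g \<in> carrier FreeAlg" "(\<lambda>w. f w - g w) \<in> II"
  shows "pi f = pi g"
  using assms by (subst pi_eq_iff) (simp_all add: fa_minus)

definition "sc r = pi (fa_scalar r)"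
definition "aW = pi gen_a"
definition "bW = pi gen_b"
definition "Cf = (\<lambda>w. dl [False, True] w + dl [True, False] w + q1 * dl [False] w + p1 * dl [True] w)"
definition "cW = pi Cf"

lemma Cf_carrier: "Cf \<in> carrier FreeAlg"
proof -
  have "Cf = dl [False, True] \<oplus>\<^bsub>FreeAlg\<^esub> dl [True, False] \<oplus>\<^bsub>FreeAlg\<^esub> fa_smult q1 (dl [False])
      \<oplus>\<^bsub>FreeAlg\<^esub> fa_smult p1 (dl [True])"
    by (simp add: Cf_def FreeAlg_simps fa_smult_def)
  then show ?thesis by (simp add: FA.a_closed)
qed

lemma sc_carrier[simp]: "sc r \<in> carrier (W p q)" by (simp add: sc_def pi_carrier)
lemma aW_carrier[simp]: "aW \<in> carrier (W p q)" by (simp add: aW_def pi_carrier)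
lemma bW_carrier[simp]: "bW \<in> carrier (W p q)" by (simp add: bW_def pi_carrier)
lemma cW_carrier[simp]: "cW \<in> carrier (W p q)" by (simp add: cW_def pi_carrier Cf_carrier)

lemma W_scalar_sc: "W_scalar p q r = sc r"
  by (simp add: W_scalar_def sc_def)

lemma sc_add: "sc (a + b) = sc a \<oplus>\<^bsub>W p q\<^esub> sc b"
proof -
  have "fa_scalar (a + b) = fa_scalar a \<oplus>\<^bsub>FreeAlg\<^esub> fa_scalar b"
    by (simp add: fa_scalar_pw FreeAlg_simps distrib_right)
  then show ?thesis by (simp add: sc_def pi_add)
qed

lemma sc_mult: "sc (a * b) = sc a \<otimes>\<^bsub>W p q\<^esub> sc b"
proof -
  have "fa_scalar (a * b) = fa_scalar a \<otimes>\<^bsub>FreeAlg\<^esub> fa_scalar b"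
    by (simp add: fa_scalar_mult_left) (simp add: fa_scalar_pw fa_smult_def mult.assoc)
  then show ?thesis by (simp add: sc_def pi_mult)
qed

lemma sc_one: "sc 1 = \<one>\<^bsub>W p q\<^esub>"
proof -
  have "fa_scalar (1::'f) = \<one>\<^bsub>FreeAlg\<^esub>" by (simp add: fa_scalar_pw fa_one_dl)
  then show ?thesis using pi_one by (simp only: sc_def)
qed

lemma sc_zero: "sc 0 = \<zero>\<^bsub>W p q\<^esub>"
proof -
  have "fa_scalar (0::'f) = \<zero>\<^bsub>FreeAlg\<^esub>" by (simp add: fa_scalar_pw FreeAlg_simps)
  then show ?thesis using pi_zero by (simp only: sc_def)
qed

lemma sc_comm: "X \<in> carrier (W p q) \<Longrightarrow> sc r \<otimes>\<^bsub>W p q\<^esub> X = X \<otimes>\<^bsub>W p q\<^esub> sc r"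
  unfolding W_carrier sc_def
  by (auto simp: pi_mult[symmetric] fa_scalar_mult_left fa_scalar_mult_right)

lemma rel_aa: "aW \<otimes>\<^bsub>W p q\<^esub> aW = sc (- p0) \<oplus>\<^bsub>W p q\<^esub> sc (- p1) \<otimes>\<^bsub>W p q\<^esub> aW"
proof -
  have "aW \<otimes>\<^bsub>W p q\<^esub> aW = pi (gen_a \<otimes>\<^bsub>FreeAlg\<^esub> gen_a)" by (simp add: aW_def pi_mult)
  also have "\<dots> = pi (fa_scalar (- p0) \<oplus>\<^bsub>FreeAlg\<^esub> fa_scalar (- p1) \<otimes>\<^bsub>FreeAlg\<^esub> gen_a)"
  proof (rule pi_eqI)
    have "(\<lambda>w. (gen_a \<otimes>\<^bsub>FreeAlg\<^esub> gen_a) w - (fa_scalar (- p0) \<oplus>\<^bsub>FreeAlg\<^esub> fa_scalar (- p1) \<otimes>\<^bsub>FreeAlg\<^esub> gen_a) w)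
        = fa_eval p gen_a"
      by (simp add: p_eval_dl FreeAlg_simps fa_scalar_pw gen_a_dl fa_mult_simps) (auto simp: dl_def)
    then show "(\<lambda>w. (gen_a \<otimes>\<^bsub>FreeAlg\<^esub> gen_a) w - (fa_scalar (- p0) \<oplus>\<^bsub>FreeAlg\<^esub> fa_scalar (- p1) \<otimes>\<^bsub>FreeAlg\<^esub> gen_a) w) \<in> II"
      using Pa_in by simp
  qed (simp_all add: FA.m_closed FA.a_closed)
  finally show ?thesis by (simp add: sc_def aW_def pi_add pi_mult FA.m_closed)
qed

lemma rel_bb: "bW \<otimes>\<^bsub>W p q\<^esub> bW = sc (- q0) \<oplus>\<^bsub>W p q\<^esub> sc (- q1) \<otimes>\<^bsub>W p q\<^esub> bW"
proof -
  have "bW \<otimes>\<^bsub>W p q\<^esub> bW = pi (gen_b \<otimes>\<^bsub>FreeAlg\<^esub> gen_b)" by (simp add: bW_def pi_mult)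
  also have "\<dots> = pi (fa_scalar (- q0) \<oplus>\<^bsub>FreeAlg\<^esub> fa_scalar (- q1) \<otimes>\<^bsub>FreeAlg\<^esub> gen_b)"
  proof (rule pi_eqI)
    have "(\<lambda>w. (gen_b \<otimes>\<^bsub>FreeAlg\<^esub> gen_b) w - (fa_scalar (- q0) \<oplus>\<^bsub>FreeAlg\<^esub> fa_scalar (- q1) \<otimes>\<^bsub>FreeAlg\<^esub> gen_b) w)
        = fa_eval q gen_b"
      by (simp add: q_eval_dl FreeAlg_simps fa_scalar_pw gen_b_dl fa_mult_simps) (auto simp: dl_def)
    then show "(\<lambda>w. (gen_b \<otimes>\<^bsub>FreeAlg\<^esub> gen_b) w - (fa_scalar (- q0) \<oplus>\<^bsub>FreeAlg\<^esub> fa_scalar (- q1) \<otimes>\<^bsub>FreeAlg\<^esub> gen_b) w) \<in> II"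
      using Pb_in by simp
  qed (simp_all add: FA.m_closed FA.a_closed)
  finally show ?thesis by (simp add: sc_def bW_def pi_add pi_mult FA.m_closed)
qed

lemma rel_ba: "bW \<otimes>\<^bsub>W p q\<^esub> aW = cW \<oplus>\<^bsub>W p q\<^esub> sc (-1) \<otimes>\<^bsub>W p q\<^esub> (aW \<otimes>\<^bsub>W p q\<^esub> bW)
   \<oplus>\<^bsub>W p q\<^esub> sc (- q1) \<otimes>\<^bsub>W p q\<^esub> aW \<oplus>\<^bsub>W p q\<^esub> sc (- p1) \<otimes>\<^bsub>W p q\<^esub> bW"
proof -
  have "gen_b \<otimes>\<^bsub>FreeAlg\<^esub> gen_a = Cf \<oplus>\<^bsub>FreeAlg\<^esub> fa_scalar (-1) \<otimes>\<^bsub>FreeAlg\<^esub> (gen_a \<otimes>\<^bsub>FreeAlg\<^esub> gen_b)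
   \<oplus>\<^bsub>FreeAlg\<^esub> fa_scalar (- q1) \<otimes>\<^bsub>FreeAlg\<^esub> gen_a \<oplus>\<^bsub>FreeAlg\<^esub> fa_scalar (- p1) \<otimes>\<^bsub>FreeAlg\<^esub> gen_b"
    by (simp add: Cf_def FreeAlg_simps fa_scalar_pw gen_a_dl gen_b_dl fa_mult_simps)
  then have "pi (gen_b \<otimes>\<^bsub>FreeAlg\<^esub> gen_a) = pi (Cf \<oplus>\<^bsub>FreeAlg\<^esub> fa_scalar (-1) \<otimes>\<^bsub>FreeAlg\<^esub> (gen_a \<otimes>\<^bsub>FreeAlg\<^esub> gen_b)
   \<oplus>\<^bsub>FreeAlg\<^esub> fa_scalar (- q1) \<otimes>\<^bsub>FreeAlg\<^esub> gen_a \<oplus>\<^bsub>FreeAlg\<^esub> fa_scalar (- p1) \<otimes>\<^bsub>FreeAlg\<^esub> gen_b)"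
    by simp
  then show ?thesis
    by (simp add: sc_def aW_def bW_def cW_def pi_add pi_mult FA.m_closed FA.a_closed Cf_carrier)
qed

lemma cW_comm_a: "cW \<otimes>\<^bsub>W p q\<^esub> aW = aW \<otimes>\<^bsub>W p q\<^esub> cW"
proof -
  have "pi (Cf \<otimes>\<^bsub>FreeAlg\<^esub> gen_a) = pi (gen_a \<otimes>\<^bsub>FreeAlg\<^esub> Cf)"
  proof (rule pi_eqI)
    have "(\<lambda>w. (Cf \<otimes>\<^bsub>FreeAlg\<^esub> gen_a) w - (gen_a \<otimes>\<^bsub>FreeAlg\<^esub> Cf) w)
        = gen_b \<otimes>\<^bsub>FreeAlg\<^esub> fa_eval p gen_a \<ominus>\<^bsub>FreeAlg\<^esub> fa_eval p gen_a \<otimes>\<^bsub>FreeAlg\<^esub> gen_b"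
      by (simp add: fa_minus FA.m_closed fa_eval_carrier)
        (simp add: p_eval_dl Cf_def FreeAlg_simps gen_a_dl gen_b_dl fa_mult_simps, auto simp: dl_def)
    moreover have "gen_b \<otimes>\<^bsub>FreeAlg\<^esub> fa_eval p gen_a \<ominus>\<^bsub>FreeAlg\<^esub> fa_eval p gen_a \<otimes>\<^bsub>FreeAlg\<^esub> gen_b \<in> II"
      unfolding a_minus_def by (intro II_add II_neg Id.I_l_closed Id.I_r_closed) (auto simp: Pa_in)
    ultimately show "(\<lambda>w. (Cf \<otimes>\<^bsub>FreeAlg\<^esub> gen_a) w - (gen_a \<otimes>\<^bsub>FreeAlg\<^esub> Cf) w) \<in> II" by simp
  qed (simp_all add: FA.m_closed Cf_carrier)
  then show ?thesis by (simp add: aW_def cW_def pi_mult Cf_carrier)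
qed

lemma cW_comm_b: "cW \<otimes>\<^bsub>W p q\<^esub> bW = bW \<otimes>\<^bsub>W p q\<^esub> cW"
proof -
  have "pi (Cf \<otimes>\<^bsub>FreeAlg\<^esub> gen_b) = pi (gen_b \<otimes>\<^bsub>FreeAlg\<^esub> Cf)"
  proof (rule pi_eqI)
    have "(\<lambda>w. (Cf \<otimes>\<^bsub>FreeAlg\<^esub> gen_b) w - (gen_b \<otimes>\<^bsub>FreeAlg\<^esub> Cf) w)
        = gen_a \<otimes>\<^bsub>FreeAlg\<^esub> fa_eval q gen_b \<ominus>\<^bsub>FreeAlg\<^esub> fa_eval q gen_b \<otimes>\<^bsub>FreeAlg\<^esub> gen_a"
      by (simp add: fa_minus FA.m_closed fa_eval_carrier)
        (simp add: q_eval_dl Cf_def FreeAlg_simps gen_a_dl gen_b_dl fa_mult_simps, auto simp: dl_def)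
    moreover have "gen_a \<otimes>\<^bsub>FreeAlg\<^esub> fa_eval q gen_b \<ominus>\<^bsub>FreeAlg\<^esub> fa_eval q gen_b \<otimes>\<^bsub>FreeAlg\<^esub> gen_a \<in> II"
      unfolding a_minus_def by (intro II_add II_neg Id.I_l_closed Id.I_r_closed) (auto simp: Pb_in)
    ultimately show "(\<lambda>w. (Cf \<otimes>\<^bsub>FreeAlg\<^esub> gen_b) w - (gen_b \<otimes>\<^bsub>FreeAlg\<^esub> Cf) w) \<in> II" by simp
  qed (simp_all add: FA.m_closed Cf_carrier)
  then show ?thesis by (simp add: bW_def cW_def pi_mult Cf_carrier)
qed

end

context WS
begin

abbreviation wm (infixl "\<odot>" 70) where "x \<odot> y \<equiv> x \<otimes>\<^bsub>W p q\<^esub> y"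
abbreviation wa (infixl "\<boxplus>" 65) where "x \<boxplus> y \<equiv> x \<oplus>\<^bsub>W p q\<^esub> y"
abbreviation wz ("\<zero>\<^sub>W") where "\<zero>\<^sub>W \<equiv> \<zero>\<^bsub>W p q\<^esub>"
abbreviation wo ("\<one>\<^sub>W") where "\<one>\<^sub>W \<equiv> \<one>\<^bsub>W p q\<^esub>"

definition "zev z = fold_coeffs (\<lambda>a acc. sc a \<boxplus> cW \<odot> acc) z \<zero>\<^sub>W"

lemma zev_0[simp]: "zev 0 = \<zero>\<^sub>W"
  by (simp add: zev_def)

lemma zev_pCons: "zev (pCons a z) = sc a \<boxplus> cW \<odot> zev z"
proof (cases "z = 0 \<and> a = 0")
  case True
  then show ?thesis by (simp add: sc_zero)
next
  case False
  then show ?thesis by (auto simp: zev_def fold_coeffs_def cCons_def)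
qed

lemma zev_carrier[simp]: "zev z \<in> carrier (W p q)"
  by (induction z) (simp_all add: zev_pCons)

lemma zev_add: "zev (z + z') = zev z \<boxplus> zev z'"
proof (induction z z' rule: poly_induct2)
  case 0
  then show ?case by simp
next
  case (pCons a z b z')
  have "zev (pCons a z + pCons b z') = (sc a \<boxplus> sc b) \<boxplus> (cW \<odot> zev z \<boxplus> cW \<odot> zev z')"
    by (simp add: zev_pCons sc_add pCons Wr.r_distr Wr.a_ac)
  also have "\<dots> = zev (pCons a z) \<boxplus> zev (pCons b z')"
    by (simp add: zev_pCons Wr.a_ac)
  finally show ?case .
qed

lemma zev_smult: "zev (smult r z) = sc r \<odot> zev z"
proof (induction z)
  case 0
  then show ?case by simp
next
  case (pCons a z)
  have "zev (smult r (pCons a z)) = sc r \<odot> sc a \<boxplus> cW \<odot> (sc r \<odot> zev z)"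
    by (simp add: zev_pCons sc_mult pCons.IH)
  also have "\<dots> = sc r \<odot> sc a \<boxplus> sc r \<odot> (cW \<odot> zev z)"
    by (simp add: Wr.m_assoc[symmetric] sc_comm[of cW])
  also have "\<dots> = sc r \<odot> zev (pCons a z)"
    by (simp add: zev_pCons Wr.r_distr)
  finally show ?case .
qed

lemma zev_mult: "zev (z * z') = zev z \<odot> zev z'"
proof (induction z)
  case 0
  then show ?case by simp
next
  case (pCons a z)
  have "zev (pCons a z * z') = sc a \<odot> zev z' \<boxplus> (sc 0 \<boxplus> cW \<odot> (zev z \<odot> zev z'))"
    by (simp add: zev_add zev_smult zev_pCons pCons.IH)
  also have "\<dots> = zev (pCons a z) \<odot> zev z'"
    by (simp add: zev_pCons sc_zero Wr.l_distr Wr.m_assoc)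
  finally show ?case .
qed

lemma zev_const: "zev [:r:] = sc r"
  by (simp add: zev_pCons)

lemma zev_one: "zev 1 = \<one>\<^sub>W"
  by (simp add: pCons_one[symmetric] zev_const sc_one del: pCons_one)

lemma zev_X: "zev [:0, 1:] = cW"
  by (simp add: zev_pCons sc_zero sc_one)

lemma zev_comm:
  assumes Y: "Y \<in> carrier (W p q)" and cY: "cW \<odot> Y = Y \<odot> cW"
  shows "zev z \<odot> Y = Y \<odot> zev z"
proof (induction z)
  case 0
  then show ?case using Y by simp
next
  case (pCons a z)
  have "zev (pCons a z) \<odot> Y = sc a \<odot> Y \<boxplus> cW \<odot> (zev z \<odot> Y)"
    using Y by (simp add: zev_pCons Wr.l_distr Wr.m_assoc)
  also have "\<dots> = Y \<odot> sc a \<boxplus> (cW \<odot> Y) \<odot> zev z"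
    using Y by (simp add: pCons.IH sc_comm[of Y] Wr.m_assoc)
  also have "\<dots> = Y \<odot> zev (pCons a z)"
    using Y by (simp add: cY zev_pCons Wr.r_distr Wr.m_assoc)
  finally show ?case .
qed

lemma zev_comm_a: "zev z \<odot> aW = aW \<odot> zev z"
  by (rule zev_comm) (simp_all add: cW_comm_a)
lemma zev_comm_b: "zev z \<odot> bW = bW \<odot> zev z"
  by (rule zev_comm) (simp_all add: cW_comm_b)

end

context WS
begin

definition "NF z0 z1 z2 z3 = zev z0 \<boxplus> zev z1 \<odot> aW \<boxplus> zev z2 \<odot> bW \<boxplus> zev z3 \<odot> (aW \<odot> bW)"

lemma NF_carrier[simp]: "NF z0 z1 z2 z3 \<in> carrier (W p q)"
  by (simp add: NF_def)

lemma NF_add: "NF a0 a1 a2 a3 \<boxplus> NF b0 b1 b2 b3 = NF (a0 + b0) (a1 + b1) (a2 + b2) (a3 + b3)"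
  by (simp add: NF_def zev_add Wr.l_distr Wr.a_ac)

lemma NF_zmul: "zev w \<odot> NF z0 z1 z2 z3 = NF (w * z0) (w * z1) (w * z2) (w * z3)"
  by (simp add: NF_def Wr.r_distr Wr.m_assoc[symmetric] zev_mult)

lemma NF_zero: "NF 0 0 0 0 = \<zero>\<^sub>W"
  by (simp add: NF_def)

lemma NF_e0: "NF 1 0 0 0 = \<one>\<^sub>W" by (simp add: NF_def zev_one)
lemma NF_e1: "NF 0 1 0 0 = aW" by (simp add: NF_def zev_one)
lemma NF_e2: "NF 0 0 1 0 = bW" by (simp add: NF_def zev_one)
lemma NF_e3: "NF 0 0 0 1 = aW \<odot> bW" by (simp add: NF_def zev_one)

lemma NF_aa: "aW \<odot> aW = NF [:- p0:] [:- p1:] 0 0"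
  by (simp add: NF_def rel_aa zev_const)

lemma NF_a_ab: "aW \<odot> (aW \<odot> bW) = NF 0 0 [:- p0:] [:- p1:]"
proof -
  have "aW \<odot> (aW \<odot> bW) = (aW \<odot> aW) \<odot> bW" by (simp add: Wr.m_assoc)
  also have "\<dots> = sc (- p0) \<odot> bW \<boxplus> sc (- p1) \<odot> (aW \<odot> bW)"
    by (simp add: rel_aa Wr.l_distr Wr.m_assoc)
  finally show ?thesis by (simp add: NF_def zev_const)
qed

lemma aW_swap: "e \<in> carrier (W p q) \<Longrightarrow> aW \<odot> (zev z \<odot> e) = zev z \<odot> (aW \<odot> e)"
  by (simp add: Wr.m_assoc[symmetric] zev_comm_a)
lemma bW_swap: "e \<in> carrier (W p q) \<Longrightarrow> bW \<odot> (zev z \<odot> e) = zev z \<odot> (bW \<odot> e)"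
  by (simp add: Wr.m_assoc[symmetric] zev_comm_b)

lemma NF_aW: "aW \<odot> NF z0 z1 z2 z3 = NF (-[:p0:] * z1) (z0 - [:p1:] * z1) (-[:p0:] * z3) (z2 - [:p1:] * z3)"
proof -
  have "aW \<odot> NF z0 z1 z2 z3 = zev z0 \<odot> aW \<boxplus> zev z1 \<odot> (aW \<odot> aW) \<boxplus> zev z2 \<odot> (aW \<odot> bW)
      \<boxplus> zev z3 \<odot> (aW \<odot> (aW \<odot> bW))"
    by (simp add: NF_def Wr.r_distr aW_swap zev_comm_a[symmetric])
  also have "\<dots> = zev z0 \<odot> NF 0 1 0 0 \<boxplus> zev z1 \<odot> NF [:- p0:] [:- p1:] 0 0 \<boxplus> zev z2 \<odot> NF 0 0 0 1
      \<boxplus> zev z3 \<odot> NF 0 0 [:- p0:] [:- p1:]"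
    by (simp only: NF_e1 NF_aa NF_e3 NF_a_ab)
  also have "\<dots> = NF (-[:p0:] * z1) (z0 - [:p1:] * z1) (-[:p0:] * z3) (z2 - [:p1:] * z3)"
    unfolding NF_zmul NF_add by (simp add: algebra_simps)
  finally show ?thesis .
qed

lemma NF_bb: "bW \<odot> bW = NF [:- q0:] 0 [:- q1:] 0"
  by (simp add: NF_def rel_bb zev_const)

lemma NF_ba: "bW \<odot> aW = NF [:0, 1:] [:- q1:] [:- p1:] [:- 1:]"
  by (simp add: NF_def rel_ba zev_const zev_X Wr.a_ac)

lemma NF_bW_right: "NF z0 z1 z2 z3 \<odot> bW = NF (-[:q0:] * z2) (-[:q0:] * z3) (z0 - [:q1:] * z2) (z1 - [:q1:] * z3)"
proof -
  have "NF z0 z1 z2 z3 \<odot> bW = zev z0 \<odot> bW \<boxplus> zev z1 \<odot> (aW \<odot> bW) \<boxplus> zev z2 \<odot> (bW \<odot> bW)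
      \<boxplus> zev z3 \<odot> (aW \<odot> (bW \<odot> bW))"
    by (simp add: NF_def Wr.l_distr Wr.m_assoc)
  also have "\<dots> = zev z0 \<odot> NF 0 0 1 0 \<boxplus> zev z1 \<odot> NF 0 0 0 1 \<boxplus> zev z2 \<odot> NF [:- q0:] 0 [:- q1:] 0
      \<boxplus> zev z3 \<odot> NF (-[:p0:] * 0) ([:- q0:] - [:p1:] * 0) (-[:p0:] * 0) ([:- q1:] - [:p1:] * 0)"
    by (simp only: NF_e2 NF_e3 NF_bb NF_aW)
  also have "\<dots> = NF (-[:q0:] * z2) (-[:q0:] * z3) (z0 - [:q1:] * z2) (z1 - [:q1:] * z3)"
    unfolding NF_zmul NF_add by (simp add: algebra_simps)
  finally show ?thesis .
qed

lemma NF_b_ab: "bW \<odot> (aW \<odot> bW) = NF [:p1 * q0:] [:q0:] [:p1 * q1, 1:] 0"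
proof -
  have "bW \<odot> (aW \<odot> bW) = (bW \<odot> aW) \<odot> bW" by (simp add: Wr.m_assoc)
  also have "\<dots> = NF [:p1 * q0:] [:q0:] [:p1 * q1, 1:] 0"
    unfolding NF_ba NF_bW_right by (simp add: algebra_simps)
  finally show ?thesis .
qed

lemma NF_bW: "bW \<odot> NF z0 z1 z2 z3 =
  NF ([:0,1:] * z1 - [:q0:] * z2 + [:p1 * q0:] * z3) (- [:q1:] * z1 + [:q0:] * z3)
     (z0 - [:p1:] * z1 - [:q1:] * z2 + [:p1 * q1, 1:] * z3) (- z1)"
proof -
  have "bW \<odot> NF z0 z1 z2 z3 = zev z0 \<odot> bW \<boxplus> zev z1 \<odot> (bW \<odot> aW) \<boxplus> zev z2 \<odot> (bW \<odot> bW)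
      \<boxplus> zev z3 \<odot> (bW \<odot> (aW \<odot> bW))"
    by (simp add: NF_def Wr.r_distr bW_swap zev_comm_b[symmetric])
  also have "\<dots> = zev z0 \<odot> NF 0 0 1 0 \<boxplus> zev z1 \<odot> NF [:0, 1:] [:- q1:] [:- p1:] [:- 1:]
      \<boxplus> zev z2 \<odot> NF [:- q0:] 0 [:- q1:] 0 \<boxplus> zev z3 \<odot> NF [:p1 * q0:] [:q0:] [:p1 * q1, 1:] 0"
    by (simp only: NF_e2 NF_ba NF_bb NF_b_ab)
  also have "\<dots> = NF ([:0,1:] * z1 - [:q0:] * z2 + [:p1 * q0:] * z3) (- [:q1:] * z1 + [:q0:] * z3)
     (z0 - [:p1:] * z1 - [:q1:] * z2 + [:p1 * q1, 1:] * z3) (- z1)"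
    unfolding NF_zmul NF_add by (simp add: algebra_simps)
  finally show ?thesis .
qed

lemma span_dl: "\<exists>z0 z1 z2 z3. pi (dl w) = NF z0 z1 z2 z3"
proof (induction w)
  case Nil
  then show ?case using NF_e0 by (metis fa_one_dl pi_one)
next
  case (Cons x w)
  then obtain z0 z1 z2 z3 where z: "pi (dl w) = NF z0 z1 z2 z3" by blast
  have "(dl (x # w) :: bool list \<Rightarrow> 'f) = dl [x] \<otimes>\<^bsub>FreeAlg\<^esub> dl w" by (simp add: dl_mult)
  then have "pi (dl (x # w)) = pi (dl [x]) \<odot> NF z0 z1 z2 z3"
    using z by (simp add: pi_mult)
  then show ?case
    by (cases x) (auto simp: gen_a_dl[symmetric] gen_b_dl[symmetric] aW_def[symmetric] bW_def[symmetric]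
        NF_aW NF_bW)
qed

lemma span_finsum:
  assumes "finite A" "g \<in> A \<rightarrow> carrier FreeAlg" "\<And>a. a \<in> A \<Longrightarrow> \<exists>z0 z1 z2 z3. pi (g a) = NF z0 z1 z2 z3"
  shows "\<exists>z0 z1 z2 z3. pi (finsum FreeAlg g A) = NF z0 z1 z2 z3"
  using assms
proof (induction A rule: finite_induct)
  case empty
  then show ?case using NF_zero by (metis FA.finsum_empty pi_zero)
next
  case (insert x F)
  then have e: "finsum FreeAlg g (insert x F) = g x \<oplus>\<^bsub>FreeAlg\<^esub> finsum FreeAlg g F"
    by (intro FA.finsum_insert) auto
  obtain a0 a1 a2 a3 where a: "pi (g x) = NF a0 a1 a2 a3" using insert by blast
  obtain b0 b1 b2 b3 where b: "pi (finsum FreeAlg g F) = NF b0 b1 b2 b3" using insert by auto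
  have "pi (finsum FreeAlg g (insert x F)) = NF a0 a1 a2 a3 \<boxplus> NF b0 b1 b2 b3"
    unfolding e using insert a b by (subst pi_add) (auto intro: FA.finsum_closed)
  then show ?case by (auto simp: NF_add)
qed

lemma span:
  assumes "f \<in> carrier FreeAlg"
  shows "\<exists>z0 z1 z2 z3. pi f = NF z0 z1 z2 z3"
proof -
  have fin: "finite {w. f w \<noteq> 0}" using assms by (simp add: FreeAlg_carrier)
  have "\<exists>z0 z1 z2 z3. pi (fa_smult (f w) (dl w)) = NF z0 z1 z2 z3" for w
  proof -
    obtain z0 z1 z2 z3 where z: "pi (dl w) = NF z0 z1 z2 z3" using span_dl by blast
    have "pi (fa_smult (f w) (dl w)) = zev [:f w:] \<odot> NF z0 z1 z2 z3"
      by (simp add: fa_scalar_mult_left[symmetric] pi_mult z zev_const sc_def)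
    then show ?thesis by (auto simp: NF_zmul)
  qed
  then show ?thesis
    using fa_decomp[OF assms] span_finsum[OF fin, of "\<lambda>w. fa_smult (f w) (dl w)"] by auto
qed

end

lemma indep_generic:
  fixes g0 g1 g2 g3 x P0 P1 Q0 Q1 :: "'a::idom"
  assumes "M2 g0 0 0 g0 + M2 g1 0 0 g1 * M2 0 (-P0) 1 (-P1)
     + M2 g2 0 0 g2 * M2 x (-(x*x + Q1*x + Q0)) 1 (-Q1 - x)
     + M2 g3 0 0 g3 * (M2 0 (-P0) 1 (-P1) * M2 x (-(x*x + Q1*x + Q0)) 1 (-Q1 - x)) = 0"
  shows "((P0 - (x*x + Q1*x + Q0)) * (P0 + (P1 + P1)*x - P1*P1 + P1*Q1 - (x*x + Q1*x + Q0))
          - P0 * (x + x - P1 + Q1) * (P1 - Q1 - (x + x))) * g2 = 0"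
    and "((P0 - (x*x + Q1*x + Q0)) * (P0 + (P1 + P1)*x - P1*P1 + P1*Q1 - (x*x + Q1*x + Q0))
          - P0 * (x + x - P1 + Q1) * (P1 - Q1 - (x + x))) * g3 = 0"
    and "g1 = - g2 - g3 * (x - P1)"
    and "g0 = - g2 * x + P0 * g3"
proof -
  define U where "U = P0 - (x*x + Q1*x + Q0)"
  define T where "T = P0 + (P1 + P1)*x - P1*P1 + P1*Q1 - (x*x + Q1*x + Q0)"
  define V where "V = P0 * (x + x - P1 + Q1)"
  define S where "S = P1 - Q1 - (x + x)"
  from assms have e11: "g0 + g2 * x - g3 * P0 = 0"
    and e12: "- g1 * P0 - g2 * (x*x + Q1*x + Q0) + g3 * (P0 * (Q1 + x)) = 0"
    and e21: "g1 + g2 + g3 * (x - P1) = 0"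
    and e22: "g0 - g1 * P1 + g2 * (- Q1 - x) + g3 * (- (x*x + Q1*x + Q0) + P1 * (Q1 + x)) = 0"
    by (simp_all add: m2_01 algebra_simps)
  have "g1 = (g1 + g2 + g3 * (x - P1)) - g2 - g3 * (x - P1)" by (simp add: algebra_simps)
  then have g1e: "g1 = - g2 - g3 * (x - P1)" using e21 by simp
  have "g0 = (g0 + g2 * x - g3 * P0) - g2 * x + P0 * g3" by (simp add: algebra_simps)
  then have g0e: "g0 = - g2 * x + P0 * g3" using e11 by simp
  have "U * g2 + V * g3 = - (- g2 - g3 * (x - P1)) * P0 - g2 * (x*x + Q1*x + Q0) + g3 * (P0 * (Q1 + x))"
    unfolding U_def V_def by (simp add: algebra_simps)
  then have E1: "U * g2 + V * g3 = 0" using e12 unfolding g1e by simp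
  have "S * g2 + T * g3 = (- g2 * x + P0 * g3) - (- g2 - g3 * (x - P1)) * P1 + g2 * (- Q1 - x) + g3 * (- (x*x + Q1*x + Q0) + P1 * (Q1 + x))"
    unfolding S_def T_def by (simp add: algebra_simps)
  then have E2: "S * g2 + T * g3 = 0" using e22 unfolding g1e g0e by simp
  have "(U * T - V * S) * g2 = T * (U * g2 + V * g3) - V * (S * g2 + T * g3)" by (simp add: algebra_simps)
  then have "(U * T - V * S) * g2 = 0" using E1 E2 by simp
  then show "((P0 - (x*x + Q1*x + Q0)) * (P0 + (P1 + P1)*x - P1*P1 + P1*Q1 - (x*x + Q1*x + Q0))
          - P0 * (x + x - P1 + Q1) * (P1 - Q1 - (x + x))) * g2 = 0"
    by (simp add: U_def T_def V_def S_def mult.assoc)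
  have "(U * T - V * S) * g3 = U * (S * g2 + T * g3) - S * (U * g2 + V * g3)" by (simp add: algebra_simps)
  then have "(U * T - V * S) * g3 = 0" using E1 E2 by simp
  then show "((P0 - (x*x + Q1*x + Q0)) * (P0 + (P1 + P1)*x - P1*P1 + P1*Q1 - (x*x + Q1*x + Q0))
          - P0 * (x + x - P1 + Q1) * (P1 - Q1 - (x + x))) * g3 = 0"
    by (simp add: U_def T_def V_def S_def mult.assoc)
  show "g1 = - g2 - g3 * (x - P1)" by (rule g1e)
  show "g0 = - g2 * x + P0 * g3" by (rule g0e)
qed

context WS
begin

definition "Dp = (([:p0:] - (Xp*Xp + [:q1:]*Xp + [:q0:])) * ([:p0:] + ([:p1:] + [:p1:])*Xp - [:p1:]*[:p1:] + [:p1:]*[:q1:] - (Xp*Xp + [:q1:]*Xp + [:q0:]))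
          - [:p0:] * (Xp + Xp - [:p1:] + [:q1:]) * ([:p1:] - [:q1:] - (Xp + Xp)))"

lemma Dp_nz: "Dp \<noteq> 0"
proof
  assume D0: "Dp = 0"
  define U where "U = [:p0:] - (Xp*Xp + [:q1:]*Xp + [:q0:])"
  define T where "T = [:p0:] + ([:p1:] + [:p1:])*Xp - [:p1:]*[:p1:] + [:p1:]*[:q1:] - (Xp*Xp + [:q1:]*Xp + [:q0:])"
  define V where "V = [:p0:] * (Xp + Xp - [:p1:] + [:q1:])"
  define S where "S = [:p1:] - [:q1:] - (Xp + Xp)"
  have "U = [:p0 - q0, - q1, -1:]" by (simp add: U_def Xp_def)
  then have dU: "degree U = 2" by simp
  have "T = [:p0 - p1*p1 + p1*q1 - q0, p1 + p1 - q1, -1:]"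
    by (simp add: T_def Xp_def algebra_simps)
  then have dT: "degree T = 2" by simp
  have "degree V \<le> 1"
    unfolding V_def Xp_def by (rule order.trans[OF degree_mult_le]) (auto intro: degree_diff_le degree_add_le)
  moreover have "degree S \<le> 1"
    unfolding S_def Xp_def by (auto intro!: degree_diff_le degree_add_le)
  ultimately have "degree (V * S) \<le> 2"
    by (intro order.trans[OF degree_mult_le]) simp
  moreover have "degree (U * T) = 4"
    using dU dT by (subst degree_mult_eq) auto
  moreover have "U * T = V * S" using D0 by (simp add: Dp_def U_def T_def V_def S_def mult.assoc)
  ultimately show False by simp
qed

lemma indep:
  assumes "sI g0 + sI g1 * A0 + sI g2 * B0 + sI g3 * (A0 * B0) = 0"
  shows "g0 = 0 \<and> g1 = 0 \<and> g2 = 0 \<and> g3 = 0"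
proof -
  have a: "M2 g0 0 0 g0 + M2 g1 0 0 g1 * M2 0 (-[:p0:]) 1 (-[:p1:])
     + M2 g2 0 0 g2 * M2 Xp (-(Xp*Xp + [:q1:]*Xp + [:q0:])) 1 (-[:q1:] - Xp)
     + M2 g3 0 0 g3 * (M2 0 (-[:p0:]) 1 (-[:p1:]) * M2 Xp (-(Xp*Xp + [:q1:]*Xp + [:q0:])) 1 (-[:q1:] - Xp)) = 0"
    using assms by (simp only: sI_def A0_def B0_def)
  have "Dp * g2 = 0" "Dp * g3 = 0" using indep_generic(1,2)[OF a] by (simp_all only: Dp_def)
  then have "g2 = 0" "g3 = 0" using Dp_nz by auto
  moreover have "g1 = 0" using indep_generic(3)[OF a] \<open>g2 = 0\<close> \<open>g3 = 0\<close> by simp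
  moreover have "g0 = 0" using indep_generic(4)[OF a] \<open>g2 = 0\<close> \<open>g3 = 0\<close> by simp
  ultimately show ?thesis by simp
qed

end

context WS
begin

lemma W_carrier_E:
  assumes "X \<in> carrier (W p q)"
  obtains x where "x \<in> carrier FreeAlg" "X = pi x"
  using assms unfolding W_carrier by auto

lemma psib_add: "X \<in> carrier (W p q) \<Longrightarrow> Y \<in> carrier (W p q) \<Longrightarrow> psib (X \<boxplus> Y) = psib X + psib Y"
  by (elim W_carrier_E) (simp add: pi_add[symmetric] psib_pi FA.a_closed rep_add)

lemma psib_mult: "X \<in> carrier (W p q) \<Longrightarrow> Y \<in> carrier (W p q) \<Longrightarrow> psib (X \<odot> Y) = psib X * psib Y"
  by (elim W_carrier_E) (simp add: pi_mult[symmetric] psib_pi FA.m_closed rep_mult)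

lemma psib_one: "psib \<one>\<^sub>W = 1"
  using psib_pi[OF FA.one_closed] by (simp add: pi_one rep_one)

lemma psib_zero: "psib \<zero>\<^sub>W = 0"
  using psib_pi[OF FA.zero_closed] by (simp add: pi_zero rep_zero)

lemma psib_sc: "psib (sc r) = sI [:r:]"
  unfolding sc_def fa_scalar_def using psib_pi[of "fa_smult r \<one>\<^bsub>FreeAlg\<^esub>"]
  by (simp add: FA.one_closed rep_smult rep_one)

lemma psib_aW: "psib aW = A0" by (simp add: aW_def psib_pi rep_gen Gm_def)
lemma psib_bW: "psib bW = B0" by (simp add: bW_def psib_pi rep_gen Gm_def)

definition "gam = m11 (psi Cf)"

lemma psi_Cf_expand: "psi Cf = A0 * B0 + B0 * A0 + sI [:q1:] * A0 + sI [:p1:] * B0"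
proof -
  have "Cf = dl [False, True] \<oplus>\<^bsub>FreeAlg\<^esub> dl [True, False] \<oplus>\<^bsub>FreeAlg\<^esub> fa_smult q1 (dl [False])
      \<oplus>\<^bsub>FreeAlg\<^esub> fa_smult p1 (dl [True])"
    by (simp add: Cf_def FreeAlg_simps fa_smult_def)
  then show ?thesis
    by (simp add: rep_add rep_smult rep_dl FA.a_closed mw_def Gm_def)
qed

lemma psi_Cf: "psi Cf = sI gam"
  unfolding gam_def psi_Cf_expand
  by (simp add: A0_def B0_def sI_def algebra_simps)

lemma gam_eq: "gam = [:- p0 - q0, p1 - q1, -1:]"
  unfolding gam_def psi_Cf_expand
  by (simp add: A0_def B0_def sI_def Xp_def algebra_simps)

lemma gam_deg: "degree gam = 2"
  by (simp add: gam_eq)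

lemma psib_cW: "psib cW = sI gam"
  by (simp add: cW_def psib_pi Cf_carrier psi_Cf)

lemma psib_zev: "psib (zev z) = sI (pcompose z gam)"
proof (induction z)
  case 0
  then show ?case by (simp add: psib_zero)
next
  case (pCons a z)
  then show ?case
    by (simp add: zev_pCons psib_add psib_mult psib_sc psib_cW pcompose_pCons sI_add sI_mult)
qed

lemma psib_NF: "psib (NF z0 z1 z2 z3) = sI (pcompose z0 gam) + sI (pcompose z1 gam) * A0
   + sI (pcompose z2 gam) * B0 + sI (pcompose z3 gam) * (A0 * B0)"
  by (simp add: NF_def psib_add psib_mult psib_zev psib_aW psib_bW)

lemma ker_psi:
  assumes d: "d \<in> carrier FreeAlg" and z: "psi d = 0"
  shows "d \<in> II"
proof -
  obtain z0 z1 z2 z3 where e: "pi d = NF z0 z1 z2 z3" using span[OF d] by blast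
  have "psib (pi d) = 0" using z d by (simp add: psib_pi)
  then have "sI (pcompose z0 gam) + sI (pcompose z1 gam) * A0
   + sI (pcompose z2 gam) * B0 + sI (pcompose z3 gam) * (A0 * B0) = 0"
    by (simp add: e psib_NF)
  then have "pcompose z0 gam = 0 \<and> pcompose z1 gam = 0 \<and> pcompose z2 gam = 0 \<and> pcompose z3 gam = 0"
    by (rule indep)
  then have "z0 = 0 \<and> z1 = 0 \<and> z2 = 0 \<and> z3 = 0"
    using pcompose_eq_0[of _ gam] gam_deg by auto
  then have "pi d = II" using e NF_zero W_zero by simp
  moreover have "d \<in> pi d" using d by (rule Id.a_rcos_self)
  ultimately show ?thesis by simp
qed

lemma psib_inj:
  assumes X: "X \<in> carrier (W p q)" and Y: "Y \<in> carrier (W p q)" and e: "psib X = psib Y"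
  shows "X = Y"
proof -
  obtain x where x: "x \<in> carrier FreeAlg" "X = pi x" using X by (rule W_carrier_E)
  obtain y where y: "y \<in> carrier FreeAlg" "Y = pi y" using Y by (rule W_carrier_E)
  have "psi (x \<ominus>\<^bsub>FreeAlg\<^esub> y) = psi x - psi y"
    using x y by (simp add: a_minus_def rep_add FA.a_inv_closed fa_hom_neg[OF rep_fa_hom])
  also have "\<dots> = 0" using e x y by (simp add: psib_pi)
  finally have "x \<ominus>\<^bsub>FreeAlg\<^esub> y \<in> II" using x y by (intro ker_psi) (auto simp: FA.minus_closed)
  then show ?thesis using x y pi_eq_iff by simp
qed

end

lemma fa_hom_gen_star:
  assumes h: "fa_hom h"
  shows "h (gen_star p q False) = sI [:tr p:] - h gen_a"
    and "h (gen_star p q True) = sI [:tr q:] - h gen_b"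
proof -
  have s: "h (fa_scalar c) = sI [:c:]" for c
    using h by (simp add: fa_scalar_def fa_homD(3,4) FA.one_closed)
  show "h (gen_star p q False) = sI [:tr p:] - h gen_a"
    using h by (simp add: gen_star_def a_minus_def fa_homD(1) FA.a_inv_closed fa_hom_neg s)
  show "h (gen_star p q True) = sI [:tr q:] - h gen_b"
    using h by (simp add: gen_star_def a_minus_def fa_homD(1) FA.a_inv_closed fa_hom_neg s)
qed

lemma quad_trace:
  fixes M :: "'f::field poly m2"
  assumes pM: "sI [:c0:] + sI [:c1:] * M + M * M = 0"
    and ns: "\<And>r. M \<noteq> sI [:r:]"
  shows "mtr M = [:- c1:]"
proof (rule ccontr)
  assume ne: "mtr M \<noteq> [:- c1:]"
  define d where "d = mtr M + [:c1:]"
  have d0: "d \<noteq> 0" using ne by (simp add: d_def add_eq_0_iff2 flip: eq_neg_iff_add_eq_0) 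
  have "sI d * M = sI (mdet M - [:c0:])"
    using cayley_hamilton[of M] pM
    by (cases M) (simp add: d_def sI_def m2_01 mtr_def mdet_def algebra_simps)
  then have e: "d * m11 M = mdet M - [:c0:]" "d * m12 M = 0" "d * m21 M = 0" "d * m22 M = mdet M - [:c0:]"
    by (cases M; simp add: sI_def)+
  then have "m12 M = 0" "m21 M = 0" using d0 by auto
  have "d * m11 M = d * m22 M" using e by simp
  then have "m11 M = m22 M" using d0 by simp
  note this \<open>m12 M = 0\<close> \<open>m21 M = 0\<close>
  then have Mg0: "M = sI (m11 M)" by (cases M) (simp add: sI_def)
  define g where "g = m11 M"
  have Mg: "M = sI g" using Mg0 g_def by simp
  have "sI [:c0:] + sI [:c1:] * sI g + sI g * sI g = 0" using pM by (simp only: Mg)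
  then have "g * g + [:c1:] * g + [:c0:] = 0"
    by (simp add: sI_def m2_01 algebra_simps)
  then have "g * g + ([:c1:] * g + [:c0:]) = 0" by (simp only: add.assoc)
  then have gg: "g * g = - ([:c1:] * g + [:c0:])" by (simp only: eq_neg_iff_add_eq_0)
  have "degree g = 0"
  proof (rule ccontr)
    assume "degree g \<noteq> 0"
    then have "g \<noteq> 0" by auto
    then have "degree (g * g) = degree g + degree g" by (simp add: degree_mult_eq)
    moreover have "degree (- ([:c1:] * g + [:c0:])) \<le> degree g"
    proof -
      have "degree ([:c1:] * g) \<le> degree g" by (simp add: degree_smult_le)
      then have "degree ([:c1:] * g + [:c0:]) \<le> degree g" by (intro degree_add_le) auto
      then show ?thesis by (simp only: degree_minus)
    qed
    ultimately show False using gg \<open>degree g \<noteq> 0\<close> by simp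
  qed
  then obtain r where gr: "g = [:r:]" by (rule degree_eq_zeroE)
  from ns[of r] Mg gr show False by simp
qed

context WS
begin

lemma sc_W_smult: "W_smult p q c X = sc c \<odot> X"
  by (simp add: W_smult_def W_scalar_sc)

lemma some_rep:
  assumes "X \<in> carrier (W p q)"
  shows "(SOME r. r \<in> X) \<in> carrier FreeAlg" "pi (SOME r. r \<in> X) = X"
proof -
  obtain x where x: "x \<in> carrier FreeAlg" "X = pi x" using assms by (rule W_carrier_E)
  have "x \<in> X" using x Id.a_rcos_self by simp
  then have s: "(SOME r. r \<in> X) \<in> X" by (rule someI[of "\<lambda>r. r \<in> X"])
  then show "(SOME r. r \<in> X) \<in> carrier FreeAlg" using x Id.a_elemrcos_carrier by blast
  show "pi (SOME r. r \<in> X) = X" using s x by (metis Id.a_repr_independence')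
qed

lemma fa_star_carrier: "f \<in> carrier FreeAlg \<Longrightarrow> fa_star p q f \<in> carrier FreeAlg"
  unfolding fa_star_def by (intro FA.finsum_closed) auto

lemma W_star_pi: "X \<in> carrier (W p q) \<Longrightarrow> W_star p q X = pi (fa_star p q (SOME r. r \<in> X))"
  by (simp add: W_star_def)

lemma psi_star: "f \<in> carrier FreeAlg \<Longrightarrow> psi (fa_star p q f) = adj (psi f)"
proof (rule fa_hom_star[OF rep_fa_hom])
  have "mtr A0 = [:tr p:]" "mtr B0 = [:tr q:]"
    by (simp_all add: A0_def B0_def mtr_def tr_def p1_def q1_def Xp_def)
  then show "adj (psi gen_a) = psi (gen_star p q False)" "adj (psi gen_b) = psi (gen_star p q True)"
    by (simp_all add: fa_hom_gen_star[OF rep_fa_hom] rep_gen Gm_def adj_tr)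
qed

end

context WS
begin

lemma main_WS:
  assumes endo: "W_alg_endo p q \<Phi>" and inj: "inj_on \<Phi> (carrier (W p q))"
  shows "\<forall>x\<in>carrier (W p q). \<Phi> (W_star p q x) = W_star p q (\<Phi> x)"
proof -
  have hom: "\<Phi> \<in> ring_hom (W p q) (W p q)"
    and lin: "\<And>c X. X \<in> carrier (W p q) \<Longrightarrow> \<Phi> (W_smult p q c X) = W_smult p q c (\<Phi> X)"
    using endo unfolding W_alg_endo_def by auto
  have Pc: "\<And>X. X \<in> carrier (W p q) \<Longrightarrow> \<Phi> X \<in> carrier (W p q)"
    using ring_hom_closed[OF hom] .
  define chi where "chi f = psib (\<Phi> (pi f))" for f :: "bool list \<Rightarrow> 'f"
  have chi_hom: "fa_hom chi"
    unfolding fa_hom_def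
  proof (intro conjI ballI allI)
    fix f g :: "bool list \<Rightarrow> 'f" assume f: "f \<in> carrier FreeAlg" and g: "g \<in> carrier FreeAlg"
    show "chi (f \<oplus>\<^bsub>FreeAlg\<^esub> g) = chi f + chi g"
      using f g by (simp add: chi_def pi_add ring_hom_add[OF hom] pi_carrier psib_add Pc)
    show "chi (f \<otimes>\<^bsub>FreeAlg\<^esub> g) = chi f * chi g"
      using f g by (simp add: chi_def pi_mult ring_hom_mult[OF hom] pi_carrier psib_mult Pc)
  next
    show "chi \<one>\<^bsub>FreeAlg\<^esub> = 1"
      by (simp add: chi_def pi_one ring_hom_one[OF hom] psib_one)
  next
    fix c :: 'f and f :: "bool list \<Rightarrow> 'f" assume f: "f \<in> carrier FreeAlg"
    have "pi (fa_smult c f) = W_smult p q c (pi f)"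
      using f by (simp add: sc_W_smult sc_def pi_mult fa_scalar_mult_left[symmetric])
    then have "\<Phi> (pi (fa_smult c f)) = W_smult p q c (\<Phi> (pi f))"
      using f lin[of "pi f" c] pi_carrier by simp
    then show "chi (fa_smult c f) = sI [:c:] * chi f"
      using f by (simp add: chi_def pi_carrier sc_W_smult psib_mult psib_sc Pc)
  qed
  have chi_sc: "chi (fa_scalar r) = sI [:r:]" for r
    using chi_hom by (simp add: fa_scalar_def fa_homD(3,4) FA.one_closed)
  have chi_II: "chi f = 0" if "f \<in> II" for f
    using that by (simp add: chi_def pi_in_II ring_hom_zero[OF hom W_ring W_ring] psib_zero)
  have nsc: "chi g \<noteq> sI [:r:]" if g: "g \<in> carrier FreeAlg" and ng: "psi g \<noteq> sI [:r:]" for g r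
  proof
    assume e: "chi g = sI [:r:]"
    have "psib (\<Phi> (pi g)) = psib (\<Phi> (sc r))"
      using e chi_sc[of r] by (simp add: chi_def sc_def)
    then have "\<Phi> (pi g) = \<Phi> (sc r)"
      using g by (intro psib_inj) (auto intro: Pc pi_carrier)
    then have "pi g = sc r"
      using inj g by (auto dest: inj_onD intro: pi_carrier)
    then have "psib (pi g) = psib (sc r)" by simp
    then show False using ng g by (simp add: psib_pi psib_sc)
  qed
  have tra: "mtr (chi gen_a) = [:tr p:]"
  proof -
    have "sI [:p0:] + sI [:p1:] * chi gen_a + chi gen_a * chi gen_a = chi (fa_eval p gen_a)"
      unfolding fa_hom_eval[OF chi_hom gen_carrier(1)]
      by (simp add: dp numeral_2_eq_2 cp2[unfolded numeral_2_eq_2] p0_def p1_def pCons_one power2_eq_square)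
    also have "\<dots> = 0" using Pa_in by (rule chi_II)
    finally have "mtr (chi gen_a) = [:- p1:]"
      by (rule quad_trace) (rule nsc, simp, simp add: rep_gen Gm_def A0_def sI_def)
    then show ?thesis by (simp add: tr_def p1_def)
  qed
  have trb: "mtr (chi gen_b) = [:tr q:]"
  proof -
    have "sI [:q0:] + sI [:q1:] * chi gen_b + chi gen_b * chi gen_b = chi (fa_eval q gen_b)"
      unfolding fa_hom_eval[OF chi_hom gen_carrier(2)]
      by (simp add: dq numeral_2_eq_2 cq2[unfolded numeral_2_eq_2] q0_def q1_def pCons_one power2_eq_square)
    also have "\<dots> = 0" using Pb_in by (rule chi_II)
    finally have "mtr (chi gen_b) = [:- q1:]"
      by (rule quad_trace) (rule nsc, simp, simp add: rep_gen Gm_def B0_def sI_def)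
    then show ?thesis by (simp add: tr_def q1_def)
  qed
  have chi_star: "chi (fa_star p q f) = adj (chi f)" if "f \<in> carrier FreeAlg" for f
  proof (rule fa_hom_star[OF chi_hom _ _ that])
    show "adj (chi gen_a) = chi (gen_star p q False)"
      by (simp add: fa_hom_gen_star[OF chi_hom] adj_tr tra)
    show "adj (chi gen_b) = chi (gen_star p q True)"
      by (simp add: fa_hom_gen_star[OF chi_hom] adj_tr trb)
  qed
  show ?thesis
  proof
    fix X assume X: "X \<in> carrier (W p q)"
    define x0 where "x0 = (SOME r. r \<in> X)"
    have x0: "x0 \<in> carrier FreeAlg" "pi x0 = X" using some_rep[OF X] by (simp_all add: x0_def)
    have PX: "\<Phi> X \<in> carrier (W p q)" using X by (rule Pc)
    define y0 where "y0 = (SOME r. r \<in> \<Phi> X)"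
    have y0: "y0 \<in> carrier FreeAlg" "pi y0 = \<Phi> X" using some_rep[OF PX] by (simp_all add: y0_def)
    have L: "W_star p q X = pi (fa_star p q x0)" using W_star_pi[OF X] by (simp add: x0_def)
    have R: "W_star p q (\<Phi> X) = pi (fa_star p q y0)" using W_star_pi[OF PX] by (simp add: y0_def)
    have "psib (\<Phi> (W_star p q X)) = chi (fa_star p q x0)" by (simp add: L chi_def)
    also have "\<dots> = adj (chi x0)" using x0(1) by (rule chi_star)
    also have "\<dots> = adj (psi y0)" using x0 y0 by (simp add: chi_def psib_pi[symmetric])
    also have "\<dots> = psi (fa_star p q y0)" using y0(1) by (simp add: psi_star)
    also have "\<dots> = psib (W_star p q (\<Phi> X))" using y0(1) by (simp add: R psib_pi fa_star_carrier)
    finally show "\<Phi> (W_star p q X) = W_star p q (\<Phi> X)"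
      using x0 y0 by (intro psib_inj) (auto simp: L R intro!: Pc pi_carrier fa_star_carrier)
  qed
qed

end

theorem mainTheorem18:
  fixes p q :: "'f::field poly"
    and \<Phi> :: "(bool list \<Rightarrow> 'f) set \<Rightarrow> (bool list \<Rightarrow> 'f) set"
  assumes "lead_coeff p = 1" and "degree p = 2"
    and "lead_coeff q = 1" and "degree q = 2"
    and "W_alg_endo p q \<Phi>"
    and "inj_on \<Phi> (carrier (W p q))"
  shows "\<forall>x\<in>carrier (W p q). \<Phi> (W_star p q x) = W_star p q (\<Phi> x)"
proof -
  interpret WS p q by unfold_locales (use assms in auto)
  show ?thesis by (rule main_WS[OF assms(5,6)])
qed

end
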